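(* Let $c$ be a nonzero real cubic form in $n$ variables, let $b\in\{1,\dotsc,n-1\}$ and let $\vec{x}^{(0)}\in\mathbb{R}^n$ with $\vec{\Delta}^{(c,b)}(\vec{x}^{(0)})\neq\vec{0}$. Then there exist a constant $A_n$ depending only on $n$ and an $(n-b)$-dimensional linear subspace $Y\subset\mathbb{R}^n$ such that for all $\vec{Y},\vec{Y}'\in Y$ and all $\vec{t}\in\mathbb{R}^n$, \[ \big|\vec{Y}^TH_c(\vec{t})\vec{Y}'\big|\leq A_n\left(\frac{\|J^{(c,b+1)}(\vec{x}^{(0)})\vec{t}\|}{\|\vec{\Delta}^{(c,b)}(\vec{x}^{(0)})\|}+\frac{|\lambda^{(c)}_{b+1}(\vec{x}^{(0)})|\,\|\vec{t}\|}{|\lambda^{(c)}_{b}(\vec{x}^{(0)})|}\right)\|\vec{Y}\|\,\|\vec{Y}'\|. \]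
   Context: $\|\cdot\|$ is the supremum norm. $\|c\|=\frac16\max_{i,j,k}|\partial^3c/\partial x_i\partial x_j\partial x_k|$ and $H_c(\vec{x})=\frac{1}{\|c\|}(\partial^2c(\vec{x})/\partial x_i\partial x_j)_{i,j}$ (Hessian of $c/\|c\|$). $\lambda_1^{(c)}(\vec{x}),\dotsc,\lambda_n^{(c)}(\vec{x})$ are the eigenvalues of $H_c(\vec{x})$, with multiplicity, in order of decreasing absolute value. $\vec{\Delta}^{(c,i)}(\vec{x})$ is the vector of all $i\times i$ minors of $H_c(\vec{x})$ (in some fixed order), and $J^{(c,i)}(\vec{x})=(\partial\Delta^{(c,i)}_j(\vec{x})/\partial x_k)_{j,k}$ its Jacobian matrix. (The hypothesis $\vec{\Delta}^{(c,b)}(\vec{x}^{(0)})\neq\vec{0}$ implies $\lambda_b^{(c)}(\vec{x}^{(0)})\neq 0$.) *)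

theory Defs
  imports Complex_Main "Jordan_Normal_Form.Char_Poly" "Jordan_Normal_Form.DL_Submatrix"
begin

definition is_cubic_form :: "nat \<Rightarrow> (real vec \<Rightarrow> real) \<Rightarrow> bool" where
  "is_cubic_form n c \<longleftrightarrow> (\<exists>C :: nat \<Rightarrow> nat \<Rightarrow> nat \<Rightarrow> real. \<forall>x \<in> carrier_vec n.
     c x = (\<Sum>i<n. \<Sum>j<n. \<Sum>k<n. C i j k * x $ i * x $ j * x $ k))"

text \<open>Partial derivative d f / d x_i at x (f a function on R^n); this is the library's deriv unfolded.\<close>
definition pderiv_at :: "nat \<Rightarrow> (real vec \<Rightarrow> real) \<Rightarrow> nat \<Rightarrow> real vec \<Rightarrow> real" where
  "pderiv_at n f i x = (SOME d. ((\<lambda>s. f (x + s \<cdot>\<^sub>v unit_vec n i)) has_real_derivative d) (at 0))"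

definition pd2 :: "nat \<Rightarrow> (real vec \<Rightarrow> real) \<Rightarrow> nat \<Rightarrow> nat \<Rightarrow> real vec \<Rightarrow> real" where
  "pd2 n f i j x = pderiv_at n (\<lambda>y. pderiv_at n f j y) i x"

definition pd3 :: "nat \<Rightarrow> (real vec \<Rightarrow> real) \<Rightarrow> nat \<Rightarrow> nat \<Rightarrow> nat \<Rightarrow> real vec \<Rightarrow> real" where
  "pd3 n f i j k x = pderiv_at n (\<lambda>y. pd2 n f j k y) i x"

text \<open>Norm of a cubic form: (1/6) max |d^3 c / dx_i dx_j dx_k| (the third partials of a
  cubic form are constant; we evaluate them at the origin).\<close>
definition cnorm :: "nat \<Rightarrow> (real vec \<Rightarrow> real) \<Rightarrow> real" where
  "cnorm n c = (1/6) * Max {\<bar>pd3 n c i j k (0\<^sub>v n)\<bar> | i j k. i < n \<and> j < n \<and> k < n}"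

definition hess :: "nat \<Rightarrow> (real vec \<Rightarrow> real) \<Rightarrow> real vec \<Rightarrow> real mat" where
  "hess n c x = mat n n (\<lambda>(i,j). pd2 n c i j x / cnorm n c)"

text \<open>Eigenvalues of H_c(x) with multiplicity, in order of decreasing absolute value
  (as roots of the characteristic polynomial; H_c(x) is real symmetric, so such a list exists).
  eig n c x k is lambda_k (1-based).\<close>
definition eig_list :: "nat \<Rightarrow> (real vec \<Rightarrow> real) \<Rightarrow> real vec \<Rightarrow> real list" where
  "eig_list n c x = (SOME ls. length ls = n \<and>
      char_poly (hess n c x) = (\<Prod>a\<leftarrow>ls. [:- a, 1:]) \<and>
      sorted_wrt (\<lambda>a b. \<bar>b\<bar> \<le> \<bar>a\<bar>) ls)"

definition eig :: "nat \<Rightarrow> (real vec \<Rightarrow> real) \<Rightarrow> real vec \<Rightarrow> nat \<Rightarrow> real" where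
  "eig n c x k = eig_list n c x ! (k - 1)"

definition minor_idx :: "nat \<Rightarrow> nat \<Rightarrow> (nat set \<times> nat set) set" where
  "minor_idx n i = {(I,J). I \<subseteq> {..<n} \<and> J \<subseteq> {..<n} \<and> card I = i \<and> card J = i}"

definition Delta :: "nat \<Rightarrow> (real vec \<Rightarrow> real) \<Rightarrow> nat set \<Rightarrow> nat set \<Rightarrow> real vec \<Rightarrow> real" where
  "Delta n c I J x = det (submatrix (hess n c x) I J)"

definition Delta_norm :: "nat \<Rightarrow> (real vec \<Rightarrow> real) \<Rightarrow> nat \<Rightarrow> real vec \<Rightarrow> real" where
  "Delta_norm n c i x = Max {\<bar>Delta n c I J x\<bar> | I J. (I,J) \<in> minor_idx n i}"

definition Jac_norm :: "nat \<Rightarrow> (real vec \<Rightarrow> real) \<Rightarrow> nat \<Rightarrow> real vec \<Rightarrow> real vec \<Rightarrow> real" where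
  "Jac_norm n c i x t = Max {\<bar>\<Sum>k<n. pderiv_at n (Delta n c I J) k x * t $ k\<bar> | I J. (I,J) \<in> minor_idx n i}"

definition supnorm :: "real vec \<Rightarrow> real" where
  "supnorm v = Max {\<bar>v $ i\<bar> | i. i < dim_vec v}"

end

theory Submission
  imports Defs "Jordan_Normal_Form.Schur_Decomposition"
begin


definition ddet :: "nat \<Rightarrow> (nat \<Rightarrow> nat \<Rightarrow> real) \<Rightarrow> (nat \<Rightarrow> nat \<Rightarrow> real) \<Rightarrow> real" where
  "ddet k e0 e1 = (\<Sum>p\<in>{p. p permutes {0..<k}}. signof p *
      (\<Sum>i\<in>{0..<k}. e1 i (p i) * (\<Prod>j\<in>{0..<k}-{i}. e0 j (p j))))"

lemma DERIV_prod_lin: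
  fixes a b :: "nat \<Rightarrow> real"
  shows "((\<lambda>s. \<Prod>i\<in>I. a i + s * b i) has_real_derivative (\<Sum>i\<in>I. b i * (\<Prod>j\<in>I-{i}. a j))) (at 0)"
proof -
  have "((\<lambda>s. \<Prod>i\<in>I. a i + s * b i) has_derivative
     (\<lambda>y. \<Sum>i\<in>I. (y * b i) * (\<Prod>j\<in>I-{i}. a j + 0 * b j))) (at 0)"
    by (rule has_derivative_prod) (auto intro!: derivative_eq_intros)
  moreover have "(\<lambda>y. \<Sum>i\<in>I. (y * b i) * (\<Prod>j\<in>I-{i}. a j + 0 * b j)) =
      (*) (\<Sum>i\<in>I. b i * (\<Prod>j\<in>I-{i}. a j))"
    by (rule ext, subst sum_distrib_right, rule sum.cong) auto
  ultimately show ?thesis unfolding has_field_derivative_def by simp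
qed

lemma ddet_deriv:
  "((\<lambda>s. det (mat k k (\<lambda>(i,j). e0 i j + s * e1 i j))) has_real_derivative ddet k e0 e1) (at 0)"
proof -
  have eq: "(\<lambda>s. det (mat k k (\<lambda>(i,j). e0 i j + s * e1 i j))) =
     (\<lambda>s. \<Sum>p\<in>{p. p permutes {0..<k}}. signof p * (\<Prod>i\<in>{0..<k}. e0 i (p i) + s * e1 i (p i)))"
  proof
    fix s
    have "det (mat k k (\<lambda>(i,j). e0 i j + s * e1 i j)) = (\<Sum>p\<in>{p. p permutes {0..<k}}.
       signof p * (\<Prod>i = 0..<k. mat k k (\<lambda>(i,j). e0 i j + s * e1 i j) $$ (i, p i)))"
      by (rule det_def') simp
    also have "\<dots> = (\<Sum>p\<in>{p. p permutes {0..<k}}. signof p * (\<Prod>i\<in>{0..<k}. e0 i (p i) + s * e1 i (p i)))"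
    proof (rule sum.cong[OF refl])
      fix p assume "p \<in> {p. p permutes {0..<k}}"
      hence "\<And>i. i < k \<Longrightarrow> p i < k" using permutes_in_image by fastforce
      thus "signof p * (\<Prod>i = 0..<k. mat k k (\<lambda>(i,j). e0 i j + s * e1 i j) $$ (i, p i)) =
        signof p * (\<Prod>i\<in>{0..<k}. e0 i (p i) + s * e1 i (p i))"
        by (auto intro!: prod.cong)
    qed
    finally show "det (mat k k (\<lambda>(i,j). e0 i j + s * e1 i j)) = (\<Sum>p\<in>{p. p permutes {0..<k}}. signof p * (\<Prod>i\<in>{0..<k}. e0 i (p i) + s * e1 i (p i)))" .
  qed
  show ?thesis unfolding eq ddet_def
    by (intro DERIV_sum DERIV_cmult DERIV_prod_lin)
qed

lemma ddet_lin:
  assumes "finite L"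
  shows "ddet k e0 (\<lambda>i j. \<Sum>l\<in>L. w l * e l i j) = (\<Sum>l\<in>L. w l * ddet k e0 (e l))"
  unfolding ddet_def
  by (simp add: sum_distrib_left sum_distrib_right sum.swap[of _ L] mult_ac)

lemma permutes_fix_all_but_one:
  assumes p: "p permutes S" and fx: "\<And>j. j \<in> S \<Longrightarrow> j \<noteq> i \<Longrightarrow> p j = j"
  shows "p = id"
proof -
  have "p i = i"
  proof (rule ccontr)
    assume ne: "p i \<noteq> i"
    have "i \<in> S" using p ne by (meson permutes_not_in)
    hence "p i \<in> S" using p by (simp add: permutes_in_image)
    hence "p (p i) = p i" using fx ne by auto
    hence "p i = i" using permutes_inj[OF p] by (auto dest: injD)
    thus False using ne by simp
  qed
  hence "\<And>j. p j = j" using fx p by (metis permutes_not_in)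
  thus ?thesis by auto
qed

lemma ddet_diag:
  "ddet k (\<lambda>i j. if i = j then d i else 0) e1 = (\<Sum>i\<in>{0..<k}. e1 i i * (\<Prod>j\<in>{0..<k}-{i}. d j))"
proof -
  have "ddet k (\<lambda>i j. if i = j then d i else 0) e1 =
    (\<Sum>p\<in>{p. p permutes {0..<k}}. if p = id then (\<Sum>i\<in>{0..<k}. e1 i i * (\<Prod>j\<in>{0..<k}-{i}. d j)) else 0)"
    unfolding ddet_def
  proof (rule sum.cong[OF refl])
    fix p assume p: "p \<in> {p. p permutes {0..<k}}"
    show "signof p * (\<Sum>i\<in>{0..<k}. e1 i (p i) * (\<Prod>j\<in>{0..<k}-{i}. if j = p j then d j else 0)) =
      (if p = id then (\<Sum>i\<in>{0..<k}. e1 i i * (\<Prod>j\<in>{0..<k}-{i}. d j)) else 0)"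
    proof (cases "p = id")
      case True thus ?thesis by (simp add: sign_id)
    next
      case False
      have "\<And>i. i \<in> {0..<k} \<Longrightarrow> (\<Prod>j\<in>{0..<k}-{i}. if j = p j then d j else 0) = 0"
      proof -
        fix i assume i: "i \<in> {0..<k}"
        have "\<exists>j\<in>{0..<k}-{i}. p j \<noteq> j"
          using permutes_fix_all_but_one[of p "{0..<k}" i] p False by auto
        then obtain j where "j \<in> {0..<k}-{i}" "p j \<noteq> j" by blast
        thus "(\<Prod>j\<in>{0..<k}-{i}. if j = p j then d j else 0) = 0"
          by (intro prod_zero) (auto intro!: bexI[of _ j])
      qed
      hence "(\<Sum>i\<in>{0..<k}. e1 i (p i) * (\<Prod>j\<in>{0..<k}-{i}. if j = p j then d j else 0)) = 0"
        by (intro sum.neutral) simp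
      thus ?thesis using False by simp
    qed
  qed
  also have "\<dots> = (\<Sum>i\<in>{0..<k}. e1 i i * (\<Prod>j\<in>{0..<k}-{i}. d j))"
    by (subst sum.delta) (auto simp: permutes_id finite_permutations)
  finally show ?thesis .
qed


definition FF :: "nat \<Rightarrow> nat \<Rightarrow> (nat \<Rightarrow> nat) set" where
  "FF k n = {f. (\<forall>i\<in>{0..<k}. f i \<in> {0..<n}) \<and> (\<forall>i. i \<notin> {0..<k} \<longrightarrow> f i = i)}"

lemma finite_FF: "finite (FF k n)"
  unfolding FF_def by (rule finite_bounded_functions) auto

lemma det_expand_rows:
  fixes u :: "nat \<Rightarrow> nat \<Rightarrow> real"
  shows "det (mat k k (\<lambda>(i,j). \<Sum>a<n. u a i * W a j)) =
    (\<Sum>f\<in>FF k n. (\<Prod>i<k. u (f i) i) * det (mat k k (\<lambda>(i,j). W (f i) j)))"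
proof -
  let ?a = "\<lambda>i l. u l i \<cdot>\<^sub>v vec k (W l)"
  have a: "?a \<in> {0..<k} \<rightarrow> {0..<n} \<rightarrow> carrier_vec k" by auto
  have eq: "mat k k (\<lambda>(i,j). \<Sum>a<n. u a i * W a j) =
     mat\<^sub>r k k (\<lambda>i. finsum_vec TYPE(real) k (?a i) {0..<n})"
    by (rule eq_matI, auto simp: index_finsum_vec lessThan_atLeast0)
  have "det (mat k k (\<lambda>(i,j). \<Sum>a<n. u a i * W a j)) =
     (\<Sum>f\<in>FF k n. det (mat\<^sub>r k k (\<lambda>i. ?a i (f i))))"
    unfolding eq FF_def by (rule det_linear_rows_sum[OF _ a]) simp
  also have "\<dots> = (\<Sum>f\<in>FF k n. (\<Prod>i<k. u (f i) i) * det (mat k k (\<lambda>(i,j). W (f i) j)))"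
  proof (rule sum.cong[OF refl])
    fix f assume f: "f \<in> FF k n"
    have "det (mat\<^sub>r k k (\<lambda>i. ?a i (f i))) = prod (\<lambda>i. u (f i) i) {0..<k} *
        det (mat\<^sub>r k k (\<lambda>i. vec k (W (f i))))"
      by (rule det_rows_mul) auto
    moreover have "mat\<^sub>r k k (\<lambda>i. vec k (W (f i))) = mat k k (\<lambda>(i,j). W (f i) j)"
      by (rule eq_matI) auto
    ultimately show "det (mat\<^sub>r k k (\<lambda>i. ?a i (f i))) =
       (\<Prod>i<k. u (f i) i) * det (mat k k (\<lambda>(i,j). W (f i) j))"
      by (simp add: lessThan_atLeast0)
  qed
  finally show ?thesis .
qed

lemma det_mat_transpose: "det (mat k k (\<lambda>(i,j). X j i)) = det (mat k k (\<lambda>(i,j). (X i j :: real)))"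
proof -
  have "mat k k (\<lambda>(i,j). X j i) = transpose_mat (mat k k (\<lambda>(i,j). X i j))"
    by (rule eq_matI) auto
  thus ?thesis by (simp add: det_transpose[of _ k])
qed

lemma det_expand_cols:
  fixes v :: "nat \<Rightarrow> nat \<Rightarrow> real"
  shows "det (mat k k (\<lambda>(i,j). \<Sum>c<n. X i c * v c j)) =
    (\<Sum>g\<in>FF k n. (\<Prod>j<k. v (g j) j) * det (mat k k (\<lambda>(i,j). X i (g j))))"
proof -
  have "det (mat k k (\<lambda>(i,j). \<Sum>c<n. X i c * v c j)) = det (mat k k (\<lambda>(i,j). \<Sum>c<n. v c i * X j c))"
    by (subst det_mat_transpose[symmetric]) (simp add: mult.commute)
  also have "\<dots> = (\<Sum>g\<in>FF k n. (\<Prod>j<k. v (g j) j) * det (mat k k (\<lambda>(i,j). X j (g i))))"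
    by (rule det_expand_rows)
  also have "\<dots> = (\<Sum>g\<in>FF k n. (\<Prod>j<k. v (g j) j) * det (mat k k (\<lambda>(i,j). X i (g j))))"
    by (subst det_mat_transpose[symmetric]) simp
  finally show ?thesis .
qed

lemma det_expand:
  fixes u v M :: "nat \<Rightarrow> nat \<Rightarrow> real"
  shows "det (mat k k (\<lambda>(i,j). \<Sum>a<n. \<Sum>c<n. u a i * M a c * v c j)) =
    (\<Sum>f\<in>FF k n. \<Sum>g\<in>FF k n. (\<Prod>i<k. u (f i) i) * (\<Prod>j<k. v (g j) j) *
        det (mat k k (\<lambda>(i,j). M (f i) (g j))))"
proof -
  have "det (mat k k (\<lambda>(i,j). \<Sum>a<n. \<Sum>c<n. u a i * M a c * v c j)) =
        det (mat k k (\<lambda>(i,j). \<Sum>a<n. u a i * (\<Sum>c<n. M a c * v c j)))"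
    by (simp add: sum_distrib_left mult.assoc)
  also have "\<dots> = (\<Sum>f\<in>FF k n. (\<Prod>i<k. u (f i) i) * det (mat k k (\<lambda>(i,j). \<Sum>c<n. M (f i) c * v c j)))"
    by (rule det_expand_rows)
  also have "\<dots> = (\<Sum>f\<in>FF k n. (\<Prod>i<k. u (f i) i) * (\<Sum>g\<in>FF k n. (\<Prod>j<k. v (g j) j) *
        det (mat k k (\<lambda>(i,j). M (f i) (g j)))))"
    by (simp only: det_expand_cols)
  also have "\<dots> = (\<Sum>f\<in>FF k n. \<Sum>g\<in>FF k n. (\<Prod>i<k. u (f i) i) * (\<Prod>j<k. v (g j) j) *
        det (mat k k (\<lambda>(i,j). M (f i) (g j))))"
    by (simp add: sum_distrib_left mult.assoc)
  finally show ?thesis .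
qed


lemma pick_ge: "i < card S \<Longrightarrow> i \<le> pick S i"
proof (induction i)
  case 0 thus ?case by simp
next
  case (Suc i)
  hence "pick S i < pick S (Suc i)" by (intro pick_mono) auto
  thus ?case using Suc by simp
qed

lemma pick_image:
  assumes "finite S"
  shows "pick S ` {..<card S} = S" and "inj_on (pick S) {..<card S}"
proof -
  show inj: "inj_on (pick S) {..<card S}"
    by (rule inj_onI) (metis lessThan_iff nat_neq_iff pick_mono)
  have sub: "pick S ` {..<card S} \<subseteq> S" using pick_in_set by auto
  moreover have "card (pick S ` {..<card S}) = card S" using card_image[OF inj] by simp
  ultimately show "pick S ` {..<card S} = S" using assms by (simp add: card_subset_eq)
qed

lemma perm_to_pick:
  assumes inj: "inj_on f {..<k}"
  defines "I \<equiv> f ` {..<k}"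
  shows "\<exists>\<sigma>. \<sigma> permutes {0..<k} \<and> (\<forall>i<k. f i = pick I (\<sigma> i))"
proof -
  define \<sigma> where "\<sigma> = (\<lambda>i. if i < k then card {a\<in>I. a < f i} else i)"
  have cI: "card I = k" unfolding I_def using card_image[OF inj] by simp
  have fI: "finite I" unfolding I_def by simp
  have pk: "\<And>i. i < k \<Longrightarrow> pick I (\<sigma> i) = f i"
    unfolding \<sigma>_def by (simp add: I_def pick_card_in_set)
  have rng: "\<And>i. i < k \<Longrightarrow> \<sigma> i < k"
  proof -
    fix i assume i: "i < k"
    have "{a\<in>I. a < f i} \<subset> I" using i unfolding I_def by auto
    hence "card {a\<in>I. a < f i} < card I" by (rule psubset_card_mono[OF fI])
    thus "\<sigma> i < k" using i cI unfolding \<sigma>_def by simp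
  qed
  have injs: "inj_on \<sigma> {0..<k}"
  proof (rule inj_onI)
    fix x y assume "x \<in> {0..<k}" "y \<in> {0..<k}" "\<sigma> x = \<sigma> y"
    hence "f x = f y" using pk by (metis atLeastLessThan_iff)
    thus "x = y" using inj \<open>x \<in> {0..<k}\<close> \<open>y \<in> {0..<k}\<close> by (auto dest: inj_onD)
  qed
  have img: "\<sigma> ` {0..<k} = {0..<k}"
    by (rule endo_inj_surj) (use rng injs in auto)
  have "bij_betw \<sigma> {0..<k} {0..<k}" using injs img by (simp add: bij_betw_def)
  moreover have "\<And>x. x \<notin> {0..<k} \<Longrightarrow> \<sigma> x = x" unfolding \<sigma>_def by auto
  ultimately have "\<sigma> permutes {0..<k}" by (rule bij_imp_permutes)
  thus ?thesis using pk by auto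
qed

lemma det_rows_pick:
  assumes inj: "inj_on f {..<k}"
  shows "\<exists>\<sigma>. \<sigma> permutes {0..<k} \<and> (\<forall>Z. det (mat k k (\<lambda>(i,j). Z (f i) j)) =
      of_int (sign \<sigma>) * det (mat k k (\<lambda>(i,j). (Z (pick (f ` {..<k}) i) j :: real))))"
proof -
  obtain \<sigma> where s: "\<sigma> permutes {0..<k}" and pk: "\<forall>i<k. f i = pick (f ` {..<k}) (\<sigma> i)"
    using perm_to_pick[OF inj] by blast
  have rng: "\<And>i. i < k \<Longrightarrow> \<sigma> i < k" using s by (metis atLeastLessThan_iff permutes_in_image zero_le)
  { fix Z :: "nat \<Rightarrow> nat \<Rightarrow> real"
    let ?A = "mat k k (\<lambda>(i,j). Z (pick (f ` {..<k}) i) j)"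
    have "mat k k (\<lambda>(i,j). Z (f i) j) = mat k k (\<lambda>(i,j). ?A $$ (\<sigma> i, j))"
      by (rule eq_matI) (auto simp: rng pk)
    hence "det (mat k k (\<lambda>(i,j). Z (f i) j)) = of_int (sign \<sigma>) * det ?A"
      using det_permute_rows[of ?A k \<sigma>] s by simp
  }
  thus ?thesis using s by blast
qed

lemma det_cols_pick:
  assumes inj: "inj_on g {..<k}"
  shows "\<exists>\<sigma>. \<sigma> permutes {0..<k} \<and> (\<forall>Z. det (mat k k (\<lambda>(i,j). Z i (g j))) =
      of_int (sign \<sigma>) * det (mat k k (\<lambda>(i,j). (Z i (pick (g ` {..<k}) j) :: real))))"
proof -
  obtain \<sigma> where s: "\<sigma> permutes {0..<k}" and h: "\<forall>Z. det (mat k k (\<lambda>(i,j). Z (g i) j)) =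
      of_int (sign \<sigma>) * det (mat k k (\<lambda>(i,j). (Z (pick (g ` {..<k}) i) j :: real)))"
    using det_rows_pick[OF inj] by blast
  { fix Z :: "nat \<Rightarrow> nat \<Rightarrow> real"
    have "det (mat k k (\<lambda>(i,j). Z i (g j))) = det (mat k k (\<lambda>(i,j). Z j (g i)))"
      by (rule det_mat_transpose[symmetric])
    also have "\<dots> = of_int (sign \<sigma>) * det (mat k k (\<lambda>(i,j). Z j (pick (g ` {..<k}) i)))"
      using h[rule_format, of "\<lambda>a b. Z b a"] by simp
    also have "det (mat k k (\<lambda>(i,j). Z j (pick (g ` {..<k}) i))) = det (mat k k (\<lambda>(i,j). Z i (pick (g ` {..<k}) j)))"
      by (rule det_mat_transpose)
    finally have "det (mat k k (\<lambda>(i,j). Z i (g j))) = of_int (sign \<sigma>) * det (mat k k (\<lambda>(i,j). Z i (pick (g ` {..<k}) j)))" .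
  }
  thus ?thesis using s by blast
qed

lemma sign_abs: "\<bar>(of_int (sign p) :: real)\<bar> = 1"
  by (simp add: sign_def)

lemma det_fg_pick:
  assumes f: "f \<in> FF k n" and g: "g \<in> FF k n" and kn: "k \<le> n"
  shows "\<exists>e I J. (I,J) \<in> minor_idx n k \<and> \<bar>e\<bar> \<le> 1 \<and> (\<forall>M. det (mat k k (\<lambda>(i,j). M (f i) (g j))) =
      e * det (mat k k (\<lambda>(i,j). (M (pick I i) (pick J j) :: real))))"
proof -
  have mi: "({..<k},{..<k}) \<in> minor_idx n k" using kn unfolding minor_idx_def by auto
  show ?thesis
  proof (cases "inj_on f {..<k}")
    case False
    then obtain i i' where ii: "i < k" "i' < k" "i \<noteq> i'" "f i = f i'" unfolding inj_on_def by auto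
    { fix M :: "nat \<Rightarrow> nat \<Rightarrow> real"
      have "det (mat k k (\<lambda>(i,j). M (f i) (g j))) = 0"
        by (rule det_identical_rows[of _ k i i']) (use ii in \<open>auto intro!: eq_vecI\<close>)
    }
    thus ?thesis using mi by (intro exI[of _ 0] exI[of _ "{..<k}"]) auto
  next
    case injf: True
    show ?thesis
    proof (cases "inj_on g {..<k}")
      case False
      then obtain i i' where ii: "i < k" "i' < k" "i \<noteq> i'" "g i = g i'" unfolding inj_on_def by auto
      { fix M :: "nat \<Rightarrow> nat \<Rightarrow> real"
        have "det (mat k k (\<lambda>(i,j). M (f i) (g j))) = 0"
          by (rule det_identical_columns[of _ k i i']) (use ii in \<open>auto intro!: eq_vecI\<close>)
      }
      thus ?thesis using mi by (intro exI[of _ 0] exI[of _ "{..<k}"]) auto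
    next
      case injg: True
      obtain \<sigma> where "\<sigma> permutes {0..<k}" and hs: "\<forall>Z. det (mat k k (\<lambda>(i,j). Z (f i) j)) =
        of_int (sign \<sigma>) * det (mat k k (\<lambda>(i,j). (Z (pick (f ` {..<k}) i) j :: real)))"
        using det_rows_pick[OF injf] by blast
      obtain \<tau> where "\<tau> permutes {0..<k}" and ht: "\<forall>Z. det (mat k k (\<lambda>(i,j). Z i (g j))) =
        of_int (sign \<tau>) * det (mat k k (\<lambda>(i,j). (Z i (pick (g ` {..<k}) j) :: real)))"
        using det_cols_pick[OF injg] by blast
      have "(f ` {..<k}, g ` {..<k}) \<in> minor_idx n k"
        using f g injf injg unfolding minor_idx_def FF_def by (auto simp: card_image)
      moreover
      { fix M :: "nat \<Rightarrow> nat \<Rightarrow> real"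
        have "det (mat k k (\<lambda>(i,j). M (f i) (g j))) = of_int (sign \<sigma>) * det (mat k k (\<lambda>(i,j). M (pick (f ` {..<k}) i) (g j)))"
          using hs[rule_format, of "\<lambda>a j. M a (g j)"] by simp
        also have "det (mat k k (\<lambda>(i,j). M (pick (f ` {..<k}) i) (g j))) =
            of_int (sign \<tau>) * det (mat k k (\<lambda>(i,j). M (pick (f ` {..<k}) i) (pick (g ` {..<k}) j)))"
          using ht[rule_format, of "\<lambda>i b. M (pick (f ` {..<k}) i) b"] by simp
        finally have "det (mat k k (\<lambda>(i,j). M (f i) (g j))) = (of_int (sign \<sigma>) * of_int (sign \<tau>)) *
            det (mat k k (\<lambda>(i,j). M (pick (f ` {..<k}) i) (pick (g ` {..<k}) j)))" by simp
      }
      moreover have "\<bar>(of_int (sign \<sigma>) * of_int (sign \<tau>) :: real)\<bar> \<le> 1"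
        by (simp add: abs_mult sign_abs)
      ultimately show ?thesis by blast
    qed
  qed
qed

lemma sorted_prod_le:
  fixes ls :: "real list"
  assumes s: "sorted_wrt (\<lambda>a b. \<bar>b\<bar> \<le> \<bar>a\<bar>) ls" and inj: "inj_on f {..<k}"
    and rng: "\<And>i. i < k \<Longrightarrow> f i < length ls"
  shows "(\<Prod>i<k. \<bar>ls ! f i\<bar>) \<le> (\<Prod>i<k. \<bar>ls ! i\<bar>)"
proof -
  define S where "S = f ` {..<k}"
  have fS: "finite S" and cS: "card S = k" unfolding S_def using card_image[OF inj] by auto
  have "(\<Prod>i<k. \<bar>ls ! f i\<bar>) = (\<Prod>x\<in>S. \<bar>ls ! x\<bar>)"
    unfolding S_def by (simp add: prod.reindex[OF inj])
  also have "\<dots> = (\<Prod>i<k. \<bar>ls ! pick S i\<bar>)"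
    using prod.reindex[OF pick_image(2)[OF fS], of "\<lambda>x. \<bar>ls ! x\<bar>"] pick_image(1)[OF fS] cS by simp
  also have "\<dots> \<le> (\<Prod>i<k. \<bar>ls ! i\<bar>)"
  proof (rule prod_mono)
    fix i assume i: "i \<in> {..<k}"
    have ge: "i \<le> pick S i" using pick_ge[of i S] i cS by simp
    have "pick S i \<in> S" using pick_in_set[of i S] i cS by simp
    hence lt: "pick S i < length ls" unfolding S_def using rng by auto
    have "\<bar>ls ! pick S i\<bar> \<le> \<bar>ls ! i\<bar>"
    proof (cases "i = pick S i")
      case True thus ?thesis by simp
    next
      case False thus ?thesis using sorted_wrt_nth_less[OF s, of i "pick S i"] ge lt by simp
    qed
    thus "0 \<le> \<bar>ls ! pick S i\<bar> \<and> \<bar>ls ! pick S i\<bar> \<le> \<bar>ls ! i\<bar>" by simp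
  qed
  finally show ?thesis .
qed

lemma det_abs_le:
  fixes A :: "real mat"
  assumes "A \<in> carrier_mat k k"
    and bnd: "\<And>p. p permutes {0..<k} \<Longrightarrow> (\<Prod>i=0..<k. \<bar>A $$ (i, p i)\<bar>) \<le> B"
  shows "\<bar>det A\<bar> \<le> fact k * B"
proof -
  have "\<bar>det A\<bar> = \<bar>\<Sum>p\<in>{p. p permutes {0..<k}}. signof p * (\<Prod>i=0..<k. A $$ (i, p i))\<bar>"
    using det_def'[OF assms(1)] by simp
  also have "\<dots> \<le> (\<Sum>p\<in>{p. p permutes {0..<k}}. \<bar>signof p * (\<Prod>i=0..<k. A $$ (i, p i))\<bar>)"
    by (rule sum_abs)
  also have "\<dots> \<le> (\<Sum>p\<in>{p. p permutes {0..<k}}. B)"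
  proof (rule sum_mono)
    fix p assume "p \<in> {p. p permutes {0..<k}}"
    hence "(\<Prod>i=0..<k. \<bar>A $$ (i, p i)\<bar>) \<le> B" using bnd by auto
    moreover have "\<bar>(signof p :: real)\<bar> = 1" by (simp add: sign_def)
    ultimately show "\<bar>signof p * (\<Prod>i=0..<k. A $$ (i, p i))\<bar> \<le> B"
      by (simp add: abs_mult abs_prod)
  qed
  also have "\<dots> = fact k * B"
    using card_permutations[of "{0..<k}" k] by simp
  finally show ?thesis .
qed

lemma det_diag_bound:
  fixes ls :: "real list"
  assumes s: "sorted_wrt (\<lambda>a b. \<bar>b\<bar> \<le> \<bar>a\<bar>) ls" and f: "f \<in> FF k (length ls)"
  shows "\<bar>det (mat k k (\<lambda>(i,j). if f i = g j then ls ! f i else 0))\<bar> \<le> fact k * (\<Prod>i<k. \<bar>ls ! i\<bar>)"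
proof (cases "inj_on f {..<k}")
  case False
  then obtain i i' where ii: "i < k" "i' < k" "i \<noteq> i'" "f i = f i'" unfolding inj_on_def by auto
  have "det (mat k k (\<lambda>(i,j). if f i = g j then ls ! f i else 0)) = 0"
    by (rule det_identical_rows[of _ k i i']) (use ii in \<open>auto intro!: eq_vecI\<close>)
  thus ?thesis by (auto intro!: mult_nonneg_nonneg prod_nonneg)
next
  case True
  have rng: "\<And>i. i < k \<Longrightarrow> f i < length ls" using f unfolding FF_def by auto
  show ?thesis
  proof (rule det_abs_le)
    fix p assume p: "p permutes {0..<k}"
    have pr: "\<And>i. i < k \<Longrightarrow> p i < k" using p by (metis atLeastLessThan_iff permutes_in_image zero_le)
    have "(\<Prod>i=0..<k. \<bar>mat k k (\<lambda>(i,j). if f i = g j then ls ! f i else 0) $$ (i, p i)\<bar>) \<le>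
       (\<Prod>i=0..<k. \<bar>ls ! f i\<bar>)"
      by (rule prod_mono) (auto simp: pr)
    also have "\<dots> \<le> (\<Prod>i<k. \<bar>ls ! i\<bar>)"
      using sorted_prod_le[OF s True rng] by (simp add: lessThan_atLeast0)
    finally show "(\<Prod>i=0..<k. \<bar>mat k k (\<lambda>(i,j). if f i = g j then ls ! f i else 0) $$ (i, p i)\<bar>) \<le> (\<Prod>i<k. \<bar>ls ! i\<bar>)" .
  qed simp
qed


interpretation ofr: map_poly_inj_comm_ring_hom "complex_of_real"
  by unfold_locales auto

lemma herm_real:
  fixes A :: "nat \<Rightarrow> nat \<Rightarrow> real" and v :: "nat \<Rightarrow> complex"
  assumes sym: "\<And>i j. i < n \<Longrightarrow> j < n \<Longrightarrow> A i j = A j i"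
    and eig: "\<And>i. i < n \<Longrightarrow> (\<Sum>j<n. of_real (A i j) * v j) = a * v i"
    and nz: "i0 < n" "v i0 \<noteq> 0"
  shows "Im a = 0"
proof -
  define s where "s = (\<Sum>i<n. \<Sum>j<n. cnj (v i) * of_real (A i j) * v j)"
  define r where "r = (\<Sum>i<n. (cmod (v i))^2)"
  have s1: "s = a * of_real r"
  proof -
    have "s = (\<Sum>i<n. cnj (v i) * (\<Sum>j<n. of_real (A i j) * v j))"
      unfolding s_def by (simp add: sum_distrib_left mult.assoc)
    also have "\<dots> = (\<Sum>i<n. a * (cnj (v i) * v i))"
      by (rule sum.cong) (auto simp: eig)
    also have "\<dots> = a * of_real r"
    proof -
      have cz: "\<And>z. cnj z * z = complex_of_real ((cmod z)^2)"
        by (metis complex_norm_square mult.commute of_real_power)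
      show ?thesis unfolding r_def by (simp add: sum_distrib_left cz)
    qed
    finally show ?thesis .
  qed
  have s2: "cnj s = s"
  proof -
    have "cnj s = (\<Sum>i<n. \<Sum>j<n. v i * of_real (A i j) * cnj (v j))"
      unfolding s_def by (simp add: cnj_sum)
    also have "\<dots> = (\<Sum>j<n. \<Sum>i<n. v i * of_real (A i j) * cnj (v j))"
      by (rule sum.swap)
    also have "\<dots> = s"
      unfolding s_def by (intro sum.cong refl) (auto simp: sym mult_ac)
    finally show ?thesis .
  qed
  have rpos: "r > 0"
  proof -
    have "(cmod (v i0))^2 > 0" using nz by simp
    moreover have "(cmod (v i0))^2 \<le> r" unfolding r_def
      by (rule member_le_sum) (use nz in auto)
    ultimately show ?thesis by linarith
  qed
  have "cnj a * of_real r = a * of_real r" using s1 s2 by (metis complex_cnj_complex_of_real complex_cnj_mult)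
  hence "cnj a = a" using rpos by simp
  thus ?thesis by (metis Reals_cnj_iff complex_is_Real_iff)
qed

lemma sym_real_eigs:
  fixes A :: "real mat"
  assumes A: "A \<in> carrier_mat n n" and sym: "\<And>i j. i < n \<Longrightarrow> j < n \<Longrightarrow> A $$ (i,j) = A $$ (j,i)"
  shows "\<exists>es. char_poly A = (\<Prod>a\<leftarrow>es. [:- a, 1:])"
proof -
  let ?Ac = "map_mat complex_of_real A"
  have Ac: "?Ac \<in> carrier_mat n n" using A by simp
  obtain as where cp: "char_poly ?Ac = (\<Prod>a\<leftarrow>as. [:- a, 1:])"
    using char_poly_factorized[OF Ac] by blast
  have real: "\<And>a. a \<in> set as \<Longrightarrow> Im a = 0"
  proof -
    fix a assume a: "a \<in> set as"
    have "poly (char_poly ?Ac) a = 0" unfolding cp using a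
      by (induction as) (auto simp: poly_prod_list)
    hence "eigenvalue ?Ac a" using eigenvalue_root_char_poly[OF Ac] by simp
    then obtain v where "eigenvector ?Ac v a" unfolding eigenvalue_def by blast
    hence v: "v \<in> carrier_vec n" "v \<noteq> 0\<^sub>v n" "?Ac *\<^sub>v v = a \<cdot>\<^sub>v v"
      unfolding eigenvector_def using A by auto
    from v obtain i0 where i0: "i0 < n" "v $ i0 \<noteq> 0" by (metis eq_vecI index_zero_vec(1,2) carrier_vecD)
    show "Im a = 0"
    proof (rule herm_real[of n "\<lambda>i j. A $$ (i,j)" "\<lambda>i. v $ i" a i0])
      fix i assume i: "i < n"
      have "(?Ac *\<^sub>v v) $ i = (a \<cdot>\<^sub>v v) $ i" using v by simp
      also have "\<dots> = a * v $ i" using v i by simp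
      finally have e: "(?Ac *\<^sub>v v) $ i = a * v $ i" .
      have "(?Ac *\<^sub>v v) $ i = (\<Sum>j<n. of_real (A $$ (i,j)) * v $ j)"
        using i A v(1) by (auto simp: scalar_prod_def lessThan_atLeast0)
      thus "(\<Sum>j<n. of_real (A $$ (i,j)) * v $ j) = a * v $ i" using e by simp
    qed (use sym i0 in auto)
  qed
  define es where "es = map Re as"
  have "map_poly complex_of_real (\<Prod>a\<leftarrow>es. [:- a, 1:]) = (\<Prod>a\<leftarrow>as. [:- a, 1:])"
    unfolding es_def using real
  proof (induction as)
    case Nil thus ?case by simp
  next
    case (Cons a as)
    have ra: "complex_of_real (Re a) = a" using Cons.prems by (simp add: complex_eq_iff)
    let ?P = "\<Prod>x\<leftarrow>map Re as. [:-x,1:]"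
    have "map_poly complex_of_real (\<Prod>x\<leftarrow>map Re (a#as). [:-x,1:]) =
       map_poly complex_of_real [:-Re a,1:] * map_poly complex_of_real ?P"
      by (simp only: list.map prod_list.Cons ofr.hom_mult)
    also have "map_poly complex_of_real [:-Re a,1:] = [:-a,1:]" using ra by (simp add: map_poly_pCons)
    also have "map_poly complex_of_real ?P = (\<Prod>x\<leftarrow>as. [:-x,1:])" using Cons by simp
    finally show ?case by simp
  qed
  also have "\<dots> = map_poly complex_of_real (char_poly A)"
    using cp of_real_hom.char_poly_hom[OF A] by metis
  finally show ?thesis by (metis ofr.injectivity)
qed

lemma sym_real_eigs_sorted:
  fixes A :: "real mat"
  assumes A: "A \<in> carrier_mat n n" and sym: "\<And>i j. i < n \<Longrightarrow> j < n \<Longrightarrow> A $$ (i,j) = A $$ (j,i)"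
  shows "\<exists>ls. length ls = n \<and> char_poly A = (\<Prod>a\<leftarrow>ls. [:- a, 1:]) \<and>
      sorted_wrt (\<lambda>a b. \<bar>b\<bar> \<le> \<bar>a\<bar>) ls"
proof -
  obtain es where cp: "char_poly A = (\<Prod>a\<leftarrow>es. [:- a, 1:])" using sym_real_eigs[OF A sym] by blast
  define ls where "ls = sort_key (\<lambda>x. - \<bar>x\<bar>) es"
  have m: "mset ls = mset es" unfolding ls_def by simp
  have "(\<Prod>a\<leftarrow>ls. [:- a, 1:]) = (\<Prod>a\<leftarrow>es. [:- a, 1:])"
    by (metis m mset_map prod_mset_prod_list)
  moreover have "sorted_wrt (\<lambda>a b. \<bar>b\<bar> \<le> \<bar>a\<bar>) ls"
    using sorted_sort_key[of "\<lambda>x. - \<bar>x\<bar>" es] unfolding ls_def sorted_map by simp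
  moreover have "length ls = n"
  proof -
    have "degree (char_poly A) = n" using degree_monic_char_poly[OF A] by simp
    moreover have "degree (\<Prod>a\<leftarrow>ls. [:- a, 1:]) = length ls"
    proof (induction ls)
      case (Cons a ls)
      have "degree ([:- a, 1:] * (\<Prod>a\<leftarrow>ls. [:- a, 1:])) = degree [:- a, 1:] + degree (\<Prod>a\<leftarrow>ls. [:- a, 1:])"
        by (rule degree_mult_eq) (auto simp: prod_list_zero_iff)
      thus ?case using Cons by simp
    qed simp
    ultimately show ?thesis using cp \<open>(\<Prod>a\<leftarrow>ls. [:- a, 1:]) = (\<Prod>a\<leftarrow>es. [:- a, 1:])\<close> by simp
  qed
  ultimately show ?thesis using cp by metis
qed


lemma conj_real_vec: "conjugate (v :: real vec) = v"
  by (rule eq_vecI) (auto simp: conjugate_real_def)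

lemma onb_with_first:
  fixes v :: "real vec"
  assumes v: "v \<in> carrier_vec n" and v1: "v \<bullet> v = 1" and n: "n \<noteq> 0"
  shows "\<exists>W \<in> carrier_mat n n. transpose_mat W * W = 1\<^sub>m n \<and> col W 0 = v"
proof -
  have v0: "v \<noteq> 0\<^sub>v n" using v1 v by auto
  interpret cof_vec_space n "TYPE(real)" .
  define b where "b = basis_completion v"
  define ws where "ws = gram_schmidt n b"
  from basis_completion[OF v v0, folded b_def]
  have span_b: "span (set b) = carrier_vec n" and dist_b: "distinct b"
    and indep: "\<not> lin_dep (set b)" and b: "set b \<subseteq> carrier_vec n" and hdb: "hd b = v"
    and len_b: "length b = n" by auto
  from hdb len_b n obtain vs where bv: "b = v # vs" by (cases b, auto)
  from gram_schmidt_result[OF b dist_b indep refl, folded ws_def]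
  have ws: "set ws \<subseteq> carrier_vec n" "corthogonal ws" "length ws = n"
    by (auto simp: len_b)
  from gram_schmidt_hd[OF v, of vs, folded bv] have hdws: "hd ws = v" unfolding ws_def .
  have ws0: "ws ! 0 = v" using hdws ws(3) n by (metis hd_conv_nth list.size(3))
  define nrm where "nrm = (\<lambda>w::real vec. (1 / sqrt (w \<bullet> w)) \<cdot>\<^sub>v w)"
  define us where "us = map nrm ws"
  have wsc: "\<And>i. i < n \<Longrightarrow> ws ! i \<in> carrier_vec n" using ws by auto
  have ortho: "\<And>i j. i < n \<Longrightarrow> j < n \<Longrightarrow> (ws ! i \<bullet> ws ! j = 0) = (i \<noteq> j)"
    using corthogonalD[OF ws(2)] ws(3) by (simp add: conj_real_vec)
  have pos: "\<And>i. i < n \<Longrightarrow> ws ! i \<bullet> ws ! i > 0"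
  proof -
    fix i assume i: "i < n"
    have "ws ! i \<bullet> ws ! i \<ge> 0"
      unfolding scalar_prod_def by (auto intro!: sum_nonneg)
    thus "ws ! i \<bullet> ws ! i > 0" using ortho[OF i i] by simp
  qed
  have usc: "\<And>i. i < n \<Longrightarrow> us ! i \<in> carrier_vec n" unfolding us_def nrm_def using ws wsc by auto
  have usp: "\<And>i j. i < n \<Longrightarrow> j < n \<Longrightarrow> us ! i \<bullet> us ! j = (if i = j then 1 else 0)"
  proof -
    fix i j assume i: "i < n" and j: "j < n"
    have "us ! i \<bullet> us ! j = (1 / sqrt (ws!i \<bullet> ws!i)) * (1 / sqrt (ws!j \<bullet> ws!j)) * (ws ! i \<bullet> ws ! j)"
      unfolding us_def nrm_def using i j ws wsc
      by (simp add: smult_scalar_prod_distrib[of _ n] scalar_prod_smult_distrib[of _ n])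
    also have "\<dots> = (if i = j then 1 else 0)"
    proof (cases "i = j")
      case True
      have p: "ws ! i \<bullet> ws ! i > 0" using pos i by simp
      have "sqrt (ws!i \<bullet> ws!i) * sqrt (ws!i \<bullet> ws!i) = ws!i \<bullet> ws!i" using p by simp
      thus ?thesis using True p by (simp add: field_simps)
    next
      case False thus ?thesis using ortho i j by simp
    qed
    finally show "us ! i \<bullet> us ! j = (if i = j then 1 else 0)" .
  qed
  define W where "W = mat_of_cols n us"
  have lus: "length us = n" unfolding us_def using ws by simp
  have W: "W \<in> carrier_mat n n" unfolding W_def using lus by auto
  have colW: "\<And>i. i < n \<Longrightarrow> col W i = us ! i" unfolding W_def using lus usc by simp
  have "transpose_mat W * W = 1\<^sub>m n"
    by (rule eq_matI) (use W colW usp in auto)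
  moreover have "col W 0 = v"
  proof -
    have "us ! 0 = nrm v" unfolding us_def using ws0 ws(3) n by simp
    also have "\<dots> = v" unfolding nrm_def using v1 by simp
    finally show ?thesis using colW n by simp
  qed
  ultimately show ?thesis using W by blast
qed


definition diagl :: "real list \<Rightarrow> nat \<Rightarrow> real mat" where
  "diagl es n = mat n n (\<lambda>(i,j). if i = j then es ! i else 0)"

lemma spectral:
  fixes A :: "real mat"
  assumes "A \<in> carrier_mat n n" "transpose_mat A = A" "char_poly A = (\<Prod>a\<leftarrow>es. [:-a,1:])"
  shows "\<exists>Q \<in> carrier_mat n n. transpose_mat Q * Q = 1\<^sub>m n \<and> transpose_mat Q * A * Q = diagl es n"
  using assms
proof (induction es arbitrary: n A)
  case Nil
  have "degree (char_poly A) = n" using degree_monic_char_poly[OF Nil(1)] by simp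
  hence n: "n = 0" using Nil(3) by simp
  have "transpose_mat (1\<^sub>m 0) * A * 1\<^sub>m 0 = diagl [] 0"
    by (rule eq_matI) (use Nil(1) n in \<open>auto simp: diagl_def\<close>)
  thus ?case using n by (intro bexI[of _ "1\<^sub>m 0"]) auto
next
  case (Cons e es n A)
  note A = Cons(2) and symA = Cons(3) and cpA = Cons(4)
  have deg: "degree (char_poly A) = n" using degree_monic_char_poly[OF A] by simp
  have "poly (char_poly A) e = 0" using cpA by simp
  hence "eigenvalue A e" using eigenvalue_root_char_poly[OF A] by simp
  then obtain v0 where "eigenvector A v0 e" unfolding eigenvalue_def by blast
  hence v0: "v0 \<in> carrier_vec n" "v0 \<noteq> 0\<^sub>v n" "A *\<^sub>v v0 = e \<cdot>\<^sub>v v0"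
    unfolding eigenvector_def using A by auto
  have n: "n \<noteq> 0" using v0 by auto
  define v where "v = (1 / sqrt (v0 \<bullet> v0)) \<cdot>\<^sub>v v0"
  have pos: "v0 \<bullet> v0 > 0"
  proof -
    have "v0 \<bullet> v0 \<ge> 0" unfolding scalar_prod_def by (auto intro!: sum_nonneg)
    moreover have "v0 \<bullet> v0 \<noteq> 0"
    proof
      assume "v0 \<bullet> v0 = 0"
      hence "\<forall>i\<in>{0..<n}. v0 $ i * v0 $ i = 0" unfolding scalar_prod_def using v0(1)
        by (subst sum_nonneg_eq_0_iff[symmetric]) auto
      hence "v0 = 0\<^sub>v n" using v0(1) by (auto intro!: eq_vecI)
      thus False using v0 by simp
    qed
    ultimately show ?thesis by simp
  qed
  have v: "v \<in> carrier_vec n" unfolding v_def using v0 by simp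
  have v1: "v \<bullet> v = 1"
  proof -
    have "v \<bullet> v = (1 / sqrt (v0 \<bullet> v0)) * (1 / sqrt (v0 \<bullet> v0)) * (v0 \<bullet> v0)"
      unfolding v_def using v0 by (simp add: smult_scalar_prod_distrib[of _ n] scalar_prod_smult_distrib[of _ n])
    also have "\<dots> = 1"
    proof -
      have "sqrt (v0 \<bullet> v0) * sqrt (v0 \<bullet> v0) = v0 \<bullet> v0" using pos by simp
      thus ?thesis using pos by (simp add: field_simps)
    qed
    finally show ?thesis .
  qed
  have Av: "A *\<^sub>v v = e \<cdot>\<^sub>v v"
    unfolding v_def using A v0 by (simp add: mult_mat_vec smult_smult_assoc mult.commute)
  obtain W where W: "W \<in> carrier_mat n n" and WW: "transpose_mat W * W = 1\<^sub>m n" and cW: "col W 0 = v"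
    using onb_with_first[OF v v1 n] by blast
  have WT: "transpose_mat W \<in> carrier_mat n n" using W by simp
  have WW': "W * transpose_mat W = 1\<^sub>m n" using mat_mult_left_right_inverse[OF WT W WW] .
  define A' where "A' = transpose_mat W * A * W"
  have A': "A' \<in> carrier_mat n n" unfolding A'_def using W A by auto
  have symA': "transpose_mat A' = A'"
  proof -
    have "transpose_mat A' = transpose_mat W * transpose_mat (transpose_mat W * A)"
      unfolding A'_def by (rule transpose_mult) (use W A in auto)
    also have "transpose_mat (transpose_mat W * A) = transpose_mat A * W"
      by (subst transpose_mult[of _ n n]) (use W A in auto)
    also have "transpose_mat W * (transpose_mat A * W) = A'"
      unfolding A'_def symA by (rule assoc_mult_mat[symmetric]) (use W A in auto)
    finally show ?thesis .
  qed
  have col0: "\<And>i. i < n \<Longrightarrow> A' $$ (i,0) = (if i = 0 then e else 0)"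
  proof -
    fix i assume i: "i < n"
    have "A' = transpose_mat W * (A * W)" unfolding A'_def using W A by simp
    hence "A' $$ (i,0) = row (transpose_mat W) i \<bullet> col (A * W) 0" using i n W A by simp
    also have "col (A * W) 0 = A *\<^sub>v col W 0" by (rule col_mult2[OF A W]) (use n in simp)
    also have "\<dots> = e \<cdot>\<^sub>v v" using cW Av by simp
    also have "row (transpose_mat W) i = col W i" using i W by simp
    also have "col W i \<bullet> (e \<cdot>\<^sub>v v) = e * (col W i \<bullet> col W 0)"
      using cW v W i by (simp add: scalar_prod_smult_distrib[of _ n])
    also have "col W i \<bullet> col W 0 = (transpose_mat W * W) $$ (i,0)" using W i n by simp
    also have "\<dots> = (if i = 0 then 1 else 0)" using WW i n by simp
    finally show "A' $$ (i,0) = (if i = 0 then e else 0)" by simp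
  qed
  have row0: "\<And>j. j < n \<Longrightarrow> A' $$ (0,j) = (if j = 0 then e else 0)"
  proof -
    fix j assume j: "j < n"
    have "A' $$ (0,j) = transpose_mat A' $$ (j,0)" using A' j n by simp
    thus "A' $$ (0,j) = (if j = 0 then e else 0)" using symA' col0[OF j] by simp
  qed
  define m where "m = n - 1"
  have nm: "n = 1 + m" unfolding m_def using n by simp
  define A3 where "A3 = mat m m (\<lambda>(i,j). A' $$ (Suc i, Suc j))"
  define E where "E = mat 1 1 (\<lambda>_. e)"
  have A3: "A3 \<in> carrier_mat m m" unfolding A3_def by simp
  have E: "E \<in> carrier_mat 1 1" unfolding E_def by simp
  have blk: "A' = four_block_mat E (0\<^sub>m 1 m) (0\<^sub>m m 1) A3"
  proof (rule eq_matI)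
    fix i j assume i: "i < dim_row (four_block_mat E (0\<^sub>m 1 m) (0\<^sub>m m 1) A3)"
      and j: "j < dim_col (four_block_mat E (0\<^sub>m 1 m) (0\<^sub>m m 1) A3)"
    hence i': "i < n" and j': "j < n" using nm E A3 by auto
    show "A' $$ (i,j) = four_block_mat E (0\<^sub>m 1 m) (0\<^sub>m m 1) A3 $$ (i,j)"
      using i j i' j' E A3 col0 row0 unfolding E_def A3_def
      by (cases i; cases j) auto
  qed (use A' nm E A3 in auto)
  have symA3: "transpose_mat A3 = A3"
  proof (rule eq_matI)
    fix i j assume "i < dim_row A3" "j < dim_col A3"
    hence ij: "i < m" "j < m" using A3 by auto
    have "A' $$ (Suc j, Suc i) = transpose_mat A' $$ (Suc i, Suc j)" using A' ij nm by simp
    thus "transpose_mat A3 $$ (i,j) = A3 $$ (i,j)" using ij symA' unfolding A3_def by simp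
  qed (use A3 in auto)
  have sim: "similar_mat A' A"
    unfolding similar_mat_def similar_mat_wit_def Let_def
    by (intro exI[of _ "transpose_mat W"] exI[of _ W]) (use A' A W WW WW' A'_def in auto)
  have "char_poly A' = char_poly A" using char_poly_similar[OF sim] .
  also have "char_poly A' = char_poly E * char_poly A3"
    unfolding blk by (rule char_poly_four_block_zeros_col[OF E _ A3]) simp
  also have "char_poly E = [:-e,1:]"
    by (simp add: E_def char_poly_defs det_def sign_def)
  finally have "[:-e,1:] * char_poly A3 = [:-e,1:] * (\<Prod>a\<leftarrow>es. [:-a,1:])" using cpA by simp
  hence cp3: "char_poly A3 = (\<Prod>a\<leftarrow>es. [:-a,1:])"
    by (metis mult_cancel_left pCons_eq_0_iff zero_neq_one)
  obtain Q3 where Q3: "Q3 \<in> carrier_mat m m" and QQ3: "transpose_mat Q3 * Q3 = 1\<^sub>m m"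
    and D3: "transpose_mat Q3 * A3 * Q3 = diagl es m"
    using Cons.IH[OF A3 symA3 cp3] by blast
  define B where "B = four_block_mat (1\<^sub>m 1) (0\<^sub>m 1 m) (0\<^sub>m m 1) Q3"
  have B: "B \<in> carrier_mat n n" unfolding B_def using Q3 nm by auto
  have BT: "transpose_mat B = four_block_mat (1\<^sub>m 1) (0\<^sub>m 1 m) (0\<^sub>m m 1) (transpose_mat Q3)"
    unfolding B_def by (subst transpose_four_block_mat) (use Q3 in auto)
  have Q3T: "transpose_mat Q3 \<in> carrier_mat m m" using Q3 by simp
  have BB: "transpose_mat B * B = 1\<^sub>m n"
  proof -
    have "transpose_mat B * B = four_block_mat (1\<^sub>m 1 * 1\<^sub>m 1 + 0\<^sub>m 1 m * 0\<^sub>m m 1) (1\<^sub>m 1 * 0\<^sub>m 1 m + 0\<^sub>m 1 m * Q3)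
      (0\<^sub>m m 1 * 1\<^sub>m 1 + transpose_mat Q3 * 0\<^sub>m m 1) (0\<^sub>m m 1 * 0\<^sub>m 1 m + transpose_mat Q3 * Q3)"
      by (subst BT, unfold B_def, rule mult_four_block_mat) (use Q3 Q3T in auto)
    also have "\<dots> = four_block_mat (1\<^sub>m 1) (0\<^sub>m 1 m) (0\<^sub>m m 1) (1\<^sub>m m)"
      using Q3 Q3T QQ3 by simp
    also have "\<dots> = 1\<^sub>m n" using nm by simp
    finally show ?thesis .
  qed
  have BAB: "transpose_mat B * A' * B = four_block_mat E (0\<^sub>m 1 m) (0\<^sub>m m 1) (transpose_mat Q3 * A3 * Q3)"
  proof -
    have "transpose_mat B * A' = four_block_mat (1\<^sub>m 1 * E + 0\<^sub>m 1 m * 0\<^sub>m m 1) (1\<^sub>m 1 * 0\<^sub>m 1 m + 0\<^sub>m 1 m * A3)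
      (0\<^sub>m m 1 * E + transpose_mat Q3 * 0\<^sub>m m 1) (0\<^sub>m m 1 * 0\<^sub>m 1 m + transpose_mat Q3 * A3)"
      unfolding BT blk by (rule mult_four_block_mat) (use Q3T E A3 in auto)
    also have "\<dots> = four_block_mat E (0\<^sub>m 1 m) (0\<^sub>m m 1) (transpose_mat Q3 * A3)"
      using Q3T E A3 by simp
    finally have 1: "transpose_mat B * A' = four_block_mat E (0\<^sub>m 1 m) (0\<^sub>m m 1) (transpose_mat Q3 * A3)" .
    have Q3A3: "transpose_mat Q3 * A3 \<in> carrier_mat m m" using Q3T A3 by simp
    have "transpose_mat B * A' * B = four_block_mat (E * 1\<^sub>m 1 + 0\<^sub>m 1 m * 0\<^sub>m m 1) (E * 0\<^sub>m 1 m + 0\<^sub>m 1 m * Q3)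
      (0\<^sub>m m 1 * 1\<^sub>m 1 + (transpose_mat Q3 * A3) * 0\<^sub>m m 1) (0\<^sub>m m 1 * 0\<^sub>m 1 m + (transpose_mat Q3 * A3) * Q3)"
      unfolding 1 unfolding B_def
      by (rule mult_four_block_mat[of E 1 1 "0\<^sub>m 1 m" m "0\<^sub>m m 1" m "transpose_mat Q3 * A3"
            "1\<^sub>m 1" 1 "0\<^sub>m 1 m" m "0\<^sub>m m 1" Q3]) (use Q3 Q3A3 E in auto)
    also have "\<dots> = four_block_mat E (0\<^sub>m 1 m) (0\<^sub>m m 1) (transpose_mat Q3 * A3 * Q3)"
      using Q3 Q3A3 E by (simp add: right_mult_zero_mat[OF Q3A3])
    finally show ?thesis .
  qed
  define Q where "Q = W * B"
  have Q: "Q \<in> carrier_mat n n" unfolding Q_def using W B by auto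
  have TQ: "transpose_mat Q = transpose_mat B * transpose_mat W"
    unfolding Q_def by (rule transpose_mult) (use W B in auto)
  have "transpose_mat Q * Q = transpose_mat B * (transpose_mat W * (W * B))"
    unfolding TQ unfolding Q_def using W B WT by (simp add: assoc_mult_mat[of _ n n _ n _ n])
  also have "transpose_mat W * (W * B) = (transpose_mat W * W) * B"
    using W B WT by (simp add: assoc_mult_mat[of _ n n _ n _ n])
  also have "\<dots> = B" using WW B by simp
  finally have "transpose_mat Q * Q = transpose_mat B * B" .
  also have "\<dots> = 1\<^sub>m n" using BB by simp
  finally have QQ: "transpose_mat Q * Q = 1\<^sub>m n" .
  have "transpose_mat Q * A * Q = transpose_mat B * A' * B"
  proof -
    have BTc: "transpose_mat B \<in> carrier_mat n n" using B by simp
    have "transpose_mat Q * A * Q = ((transpose_mat B * transpose_mat W) * A) * (W * B)"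
      unfolding TQ unfolding Q_def ..
    also have "\<dots> = transpose_mat B * ((transpose_mat W * A * W) * B)"
      using BTc WT A W B by (simp add: assoc_mult_mat[of _ n n _ n _ n])
    also have "\<dots> = transpose_mat B * A' * B"
      unfolding A'_def[symmetric] using BTc A' B by (simp add: assoc_mult_mat[of _ n n _ n _ n])
    finally show ?thesis .
  qed
  also have "\<dots> = diagl (e # es) n"
    unfolding BAB D3
  proof (rule eq_matI)
    fix i j assume "i < dim_row (diagl (e # es) n)" "j < dim_col (diagl (e # es) n)"
    hence ij: "i < n" "j < n" by (auto simp: diagl_def)
    show "four_block_mat E (0\<^sub>m 1 m) (0\<^sub>m m 1) (diagl es m) $$ (i,j) = diagl (e # es) n $$ (i,j)"
      using ij nm unfolding E_def diagl_def by (cases i; cases j) auto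
  qed (auto simp: diagl_def E_def nm)
  finally show ?case using Q QQ by blast
qed


lemma line_idx:
  assumes "x \<in> carrier_vec n" "i < n" "a < n"
  shows "(x + s \<cdot>\<^sub>v unit_vec n i) $ a = x $ a + s * (if a = i then 1 else 0)"
  using assms by (auto simp: unit_vec_def)

lemma line_carrier: "x \<in> carrier_vec n \<Longrightarrow> x + s \<cdot>\<^sub>v unit_vec n i \<in> carrier_vec n"
  by simp

lemma pderiv_eq:
  assumes "\<And>s. f (x + s \<cdot>\<^sub>v unit_vec n i) = g s" "(g has_real_derivative d) (at 0)"
  shows "pderiv_at n f i x = d"
proof -
  have eq: "(\<lambda>s. f (x + s \<cdot>\<^sub>v unit_vec n i)) = g" using assms(1) by auto
  show ?thesis unfolding pderiv_at_def eq
    by (rule some_equality) (use assms(2) DERIV_unique in blast)+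
qed

lemma delta_sum: "(i::nat) < n \<Longrightarrow> (\<Sum>a<n. (if a = i then 1 else 0) * (G a :: real)) = G i"
proof -
  assume i: "i < n"
  have "(\<Sum>a<n. (if a = i then 1 else 0) * G a) = (\<Sum>a<n. if a = i then G a else 0)"
    by (rule sum.cong) auto
  also have "\<dots> = G i" using i by (subst sum.delta) auto
  finally show ?thesis .
qed

definition sym3 :: "(nat \<Rightarrow> nat \<Rightarrow> nat \<Rightarrow> real) \<Rightarrow> bool" where
  "sym3 S \<longleftrightarrow> (\<forall>a b c. S a b c = S b a c \<and> S a b c = S a c b)"

lemma DERIV_lin_path:
  "((\<lambda>s. (xa::real) + s * d) has_real_derivative d) (at 0)"
  by (auto intro!: derivative_eq_intros)

lemma deriv_lin:
  fixes x :: "real vec" and L :: "nat \<Rightarrow> real"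
  assumes i: "i < n"
  shows "((\<lambda>s. \<Sum>c<n. L c * (x $ c + s * (if c = i then 1 else 0))) has_real_derivative L i) (at 0)"
proof -
  have "((\<lambda>s. \<Sum>c<n. L c * (x $ c + s * (if c = i then 1 else 0))) has_real_derivative
      (\<Sum>c<n. L c * (if c = i then 1 else 0))) (at 0)"
    by (intro DERIV_sum DERIV_cmult DERIV_lin_path)
  moreover have "(\<Sum>c<n. L c * (if c = i then 1 else 0)) = L i" using i
    by (simp add: if_distrib sum.delta cong: if_cong)
  ultimately show ?thesis by simp
qed

lemma bi_deriv: "((\<lambda>s. ((a::real) + s*da) * (b + s*db)) has_real_derivative (da*b + a*db)) (at 0)"
  by (auto intro!: derivative_eq_intros simp: algebra_simps)

lemma tri_deriv: "((\<lambda>s. ((a::real) + s*da) * (b + s*db) * (c + s*dc)) has_real_derivative (da*b*c + a*db*c + a*b*dc)) (at 0)"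
  by (auto intro!: derivative_eq_intros simp: algebra_simps)

lemma deriv_quad:
  fixes x :: "real vec" and T :: "nat \<Rightarrow> nat \<Rightarrow> real"
  assumes i: "i < n" and sym: "\<And>b c. T b c = T c b"
  shows "((\<lambda>s. \<Sum>b<n. \<Sum>c<n. T b c * ((x $ b + s * (if b = i then 1 else 0)) * (x $ c + s * (if c = i then 1 else 0))))
     has_real_derivative 2 * (\<Sum>c<n. T i c * x $ c)) (at 0)"
proof -
  let ?d = "\<lambda>a. (if a = i then 1 else 0) :: real"
  have "((\<lambda>s. \<Sum>b<n. \<Sum>c<n. T b c * ((x $ b + s * ?d b) * (x $ c + s * ?d c)))
     has_real_derivative (\<Sum>b<n. \<Sum>c<n. T b c * (?d b * x $ c + x $ b * ?d c))) (at 0)"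
    by (intro DERIV_sum DERIV_cmult bi_deriv)
  moreover have "(\<Sum>b<n. \<Sum>c<n. T b c * (?d b * x $ c + x $ b * ?d c))
     = (\<Sum>b<n. \<Sum>c<n. T b c * ?d b * x $ c) + (\<Sum>b<n. \<Sum>c<n. T b c * x $ b * ?d c)"
    by (simp add: algebra_simps sum.distrib)
  moreover have "(\<Sum>b<n. \<Sum>c<n. T b c * ?d b * x $ c) = (\<Sum>c<n. T i c * x $ c)"
  proof -
    have "(\<Sum>b<n. \<Sum>c<n. T b c * ?d b * x $ c) = (\<Sum>b<n. ?d b * (\<Sum>c<n. T b c * x $ c))"
      by (simp add: sum_distrib_left mult_ac)
    thus ?thesis using delta_sum[OF i] by simp
  qed
  moreover have "(\<Sum>b<n. \<Sum>c<n. T b c * x $ b * ?d c) = (\<Sum>b<n. T b i * x $ b)"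
  proof -
    have "\<And>b. (\<Sum>c<n. T b c * x $ b * ?d c) = (\<Sum>c<n. ?d c * (T b c * x $ b))"
      by (simp add: mult_ac)
    thus ?thesis using delta_sum[OF i] by simp
  qed
  moreover have "(\<Sum>b<n. T b i * x $ b) = (\<Sum>c<n. T i c * x $ c)" using sym by simp
  ultimately show ?thesis by simp
qed

lemma deriv_cub:
  fixes x :: "real vec" and S :: "nat \<Rightarrow> nat \<Rightarrow> nat \<Rightarrow> real"
  assumes i: "i < n" and sym: "sym3 S"
  shows "((\<lambda>s. \<Sum>a<n. \<Sum>b<n. \<Sum>c<n. S a b c * ((x $ a + s * (if a = i then 1 else 0)) *
       (x $ b + s * (if b = i then 1 else 0)) * (x $ c + s * (if c = i then 1 else 0))))
     has_real_derivative 3 * (\<Sum>b<n. \<Sum>c<n. S i b c * x $ b * x $ c)) (at 0)"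
proof -
  let ?d = "\<lambda>a. (if a = i then 1 else 0) :: real"
  have s1: "\<And>a b c. S a b c = S b a c" and s2: "\<And>a b c. S a b c = S a c b" using sym unfolding sym3_def by auto
  have "((\<lambda>s. \<Sum>a<n. \<Sum>b<n. \<Sum>c<n. S a b c * ((x $ a + s * ?d a) * (x $ b + s * ?d b) * (x $ c + s * ?d c)))
     has_real_derivative (\<Sum>a<n. \<Sum>b<n. \<Sum>c<n. S a b c * (
        ?d a * x $ b * x $ c + x $ a * ?d b * x $ c + x $ a * x $ b * ?d c))) (at 0)"
    by (intro DERIV_sum DERIV_cmult tri_deriv)
  moreover have "(\<Sum>a<n. \<Sum>b<n. \<Sum>c<n. S a b c * (
        ?d a * x $ b * x $ c + x $ a * ?d b * x $ c + x $ a * x $ b * ?d c))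
     = (\<Sum>a<n. \<Sum>b<n. \<Sum>c<n. S a b c * ?d a * x $ b * x $ c) +
       (\<Sum>a<n. \<Sum>b<n. \<Sum>c<n. S a b c * x $ a * ?d b * x $ c) +
       (\<Sum>a<n. \<Sum>b<n. \<Sum>c<n. S a b c * x $ a * x $ b * ?d c)"
    by (simp add: distrib_left sum.distrib mult.assoc)
  moreover have "(\<Sum>a<n. \<Sum>b<n. \<Sum>c<n. S a b c * ?d a * x $ b * x $ c) = (\<Sum>b<n. \<Sum>c<n. S i b c * x $ b * x $ c)"
  proof -
    have "(\<Sum>a<n. \<Sum>b<n. \<Sum>c<n. S a b c * ?d a * x $ b * x $ c) = (\<Sum>a<n. ?d a * (\<Sum>b<n. \<Sum>c<n. S a b c * x $ b * x $ c))"
      by (simp add: sum_distrib_left mult_ac)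
    thus ?thesis using delta_sum[OF i] by simp
  qed
  moreover have "(\<Sum>a<n. \<Sum>b<n. \<Sum>c<n. S a b c * x $ a * ?d b * x $ c) = (\<Sum>a<n. \<Sum>c<n. S a i c * x $ a * x $ c)"
  proof -
    have "\<And>a. (\<Sum>b<n. \<Sum>c<n. S a b c * x $ a * ?d b * x $ c) = (\<Sum>b<n. ?d b * (\<Sum>c<n. S a b c * x $ a * x $ c))"
      by (simp add: sum_distrib_left mult_ac)
    thus ?thesis using delta_sum[OF i] by simp
  qed
  moreover have "(\<Sum>a<n. \<Sum>b<n. \<Sum>c<n. S a b c * x $ a * x $ b * ?d c) = (\<Sum>a<n. \<Sum>b<n. S a b i * x $ a * x $ b)"
  proof -
    have "\<And>a b. (\<Sum>c<n. S a b c * x $ a * x $ b * ?d c) = (\<Sum>c<n. ?d c * (S a b c * x $ a * x $ b))"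
      by (simp add: mult_ac)
    thus ?thesis using delta_sum[OF i] by simp
  qed
  moreover have "(\<Sum>a<n. \<Sum>c<n. S a i c * x $ a * x $ c) = (\<Sum>b<n. \<Sum>c<n. S i b c * x $ b * x $ c)"
    using s1 by simp
  moreover have "(\<Sum>a<n. \<Sum>b<n. S a b i * x $ a * x $ b) = (\<Sum>b<n. \<Sum>c<n. S i b c * x $ b * x $ c)"
  proof -
    have e: "\<And>a b. S a b i = S i a b" using s1 s2 by metis
    show ?thesis by (rule sum.cong[OF refl], rule sum.cong[OF refl], subst e, rule refl)
  qed
  ultimately show ?thesis by simp
qed

lemma L12: "(\<Sum>a<n. \<Sum>b<n. \<Sum>d<(n::nat). F a b d) = (\<Sum>a<n. \<Sum>b<n. \<Sum>d<n. (F b a d :: real))"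
  by (rule sum.swap)

lemma L23: "(\<Sum>a<n. \<Sum>b<n. \<Sum>d<(n::nat). F a b d) = (\<Sum>a<n. \<Sum>b<n. \<Sum>d<n. (F a d b :: real))"
  by (rule sum.cong[OF refl], rule sum.swap)

lemma cubic_sym:
  assumes "is_cubic_form n c"
  shows "\<exists>S. sym3 S \<and> (\<forall>x\<in>carrier_vec n. c x = (\<Sum>a<n. \<Sum>b<n. \<Sum>d<n. S a b d * (x $ a * x $ b * x $ d)))"
proof -
  obtain C where C: "\<And>x. x \<in> carrier_vec n \<Longrightarrow> c x = (\<Sum>i<n. \<Sum>j<n. \<Sum>k<n. C i j k * x $ i * x $ j * x $ k)"
    using assms unfolding is_cubic_form_def by blast
  define S where "S a b d = (C a b d + C a d b + C b a d + C b d a + C d a b + C d b a) / 6" for a b d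
  have sym: "sym3 S" unfolding sym3_def S_def by (auto simp: algebra_simps)
  { fix x :: "real vec" assume x: "x \<in> carrier_vec n"
    define X where "X a b d = x $ a * x $ b * x $ d" for a b d
    have X: "\<And>a b d. X a b d = X a d b" "\<And>a b d. X a b d = X b a d" unfolding X_def by (auto simp: mult_ac)
    let ?B = "\<Sum>a<n. \<Sum>b<n. \<Sum>d<n. C a b d * X a b d"
    have t2: "(\<Sum>a<n. \<Sum>b<n. \<Sum>d<n. C a d b * X a b d) = ?B"
      using L23[of "\<lambda>a b d. C a d b * X a b d" n] X by simp
    have t3: "(\<Sum>a<n. \<Sum>b<n. \<Sum>d<n. C b a d * X a b d) = ?B"
      using L12[of "\<lambda>a b d. C b a d * X a b d" n] X by simp
    have t4: "(\<Sum>a<n. \<Sum>b<n. \<Sum>d<n. C b d a * X a b d) = ?B"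
    proof -
      have "(\<Sum>a<n. \<Sum>b<n. \<Sum>d<n. C b d a * X a b d) = (\<Sum>a<n. \<Sum>b<n. \<Sum>d<n. C a d b * X b a d)"
        by (rule L12)
      also have "\<dots> = (\<Sum>a<n. \<Sum>b<n. \<Sum>d<n. C a b d * X d a b)" by (rule L23)
      finally show ?thesis using X by simp
    qed
    have t5: "(\<Sum>a<n. \<Sum>b<n. \<Sum>d<n. C d a b * X a b d) = ?B"
    proof -
      have "(\<Sum>a<n. \<Sum>b<n. \<Sum>d<n. C d a b * X a b d) = (\<Sum>a<n. \<Sum>b<n. \<Sum>d<n. C b a d * X a d b)"
        by (rule L23)
      also have "\<dots> = (\<Sum>a<n. \<Sum>b<n. \<Sum>d<n. C a b d * X b d a)" by (rule L12)
      finally show ?thesis using X by simp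
    qed
    have t6: "(\<Sum>a<n. \<Sum>b<n. \<Sum>d<n. C d b a * X a b d) = ?B"
    proof -
      have "(\<Sum>a<n. \<Sum>b<n. \<Sum>d<n. C d b a * X a b d) = (\<Sum>a<n. \<Sum>b<n. \<Sum>d<n. C d a b * X b a d)"
        by (rule L12)
      also have "\<dots> = (\<Sum>a<n. \<Sum>b<n. \<Sum>d<n. C d a b * X a b d)" using X by simp
      finally show ?thesis using t5 by simp
    qed
    have e1: "6 * (\<Sum>a<n. \<Sum>b<n. \<Sum>d<n. S a b d * X a b d) =
      (\<Sum>a<n. \<Sum>b<n. \<Sum>d<n. C a b d * X a b d + C a d b * X a b d + C b a d * X a b d +
         C b d a * X a b d + C d a b * X a b d + C d b a * X a b d)"
      unfolding S_def by (simp only: sum_distrib_left) (intro sum.cong refl, simp add: field_simps)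
    also have "\<dots> = (\<Sum>a<n. \<Sum>b<n. \<Sum>d<n. C a b d * X a b d) + (\<Sum>a<n. \<Sum>b<n. \<Sum>d<n. C a d b * X a b d) +
       (\<Sum>a<n. \<Sum>b<n. \<Sum>d<n. C b a d * X a b d) + (\<Sum>a<n. \<Sum>b<n. \<Sum>d<n. C b d a * X a b d) +
       (\<Sum>a<n. \<Sum>b<n. \<Sum>d<n. C d a b * X a b d) + (\<Sum>a<n. \<Sum>b<n. \<Sum>d<n. C d b a * X a b d)"
      by (simp only: sum.distrib)
    also have "\<dots> = 6 * ?B" using t2 t3 t4 t5 t6 by simp
    finally have "(\<Sum>a<n. \<Sum>b<n. \<Sum>d<n. S a b d * X a b d) = ?B" by simp
    also have "?B = c x" using C[OF x] unfolding X_def by (simp add: mult.assoc)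
    finally have "c x = (\<Sum>a<n. \<Sum>b<n. \<Sum>d<n. S a b d * (x $ a * x $ b * x $ d))"
      unfolding X_def by simp
  }
  thus ?thesis using sym by blast
qed


lemma cubic_facts:
  assumes cf: "is_cubic_form n c" and nz: "\<exists>x\<in>carrier_vec n. c x \<noteq> 0"
  shows "\<exists>S K. sym3 S \<and> K > 0 \<and> (\<forall>a<n. \<forall>b<n. \<forall>d<n. \<bar>S a b d\<bar> \<le> K) \<and>
     (\<forall>x\<in>carrier_vec n. \<forall>i<n. \<forall>j<n. hess n c x $$ (i,j) = 6 * (\<Sum>l<n. S i j l * x $ l) / K)"
proof -
  obtain S where sym: "sym3 S" and cx: "\<And>x. x \<in> carrier_vec n \<Longrightarrow> c x = (\<Sum>a<n. \<Sum>b<n. \<Sum>d<n. S a b d * (x $ a * x $ b * x $ d))"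
    using cubic_sym[OF cf] by blast
  have s1: "\<And>a b d. S a b d = S b a d" and s2: "\<And>a b d. S a b d = S a d b" using sym unfolding sym3_def by auto
  have P1: "pderiv_at n c j y = 3 * (\<Sum>b<n. \<Sum>d<n. S j b d * y $ b * y $ d)" if y: "y \<in> carrier_vec n" and j: "j < n" for y j
  proof (rule pderiv_eq)
    fix s
    have "c (y + s \<cdot>\<^sub>v unit_vec n j) = (\<Sum>a<n. \<Sum>b<n. \<Sum>d<n. S a b d * ((y + s \<cdot>\<^sub>v unit_vec n j) $ a *
       (y + s \<cdot>\<^sub>v unit_vec n j) $ b * (y + s \<cdot>\<^sub>v unit_vec n j) $ d))"
      using cx[OF line_carrier[OF y]] .
    also have "\<dots> = (\<Sum>a<n. \<Sum>b<n. \<Sum>d<n. S a b d * ((y $ a + s * (if a = j then 1 else 0)) *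
       (y $ b + s * (if b = j then 1 else 0)) * (y $ d + s * (if d = j then 1 else 0))))"
      using y by (intro sum.cong refl) (simp add: unit_vec_def)
    finally show "c (y + s \<cdot>\<^sub>v unit_vec n j) = (\<Sum>a<n. \<Sum>b<n. \<Sum>d<n. S a b d * ((y $ a + s * (if a = j then 1 else 0)) *
       (y $ b + s * (if b = j then 1 else 0)) * (y $ d + s * (if d = j then 1 else 0))))" .
  qed (rule deriv_cub[OF j sym])
  have P2: "pd2 n c i j y = 6 * (\<Sum>d<n. S i j d * y $ d)" if y: "y \<in> carrier_vec n" and i: "i < n" and j: "j < n" for y i j
    unfolding pd2_def
  proof (rule pderiv_eq)
    fix s
    show "pderiv_at n c j (y + s \<cdot>\<^sub>v unit_vec n i) = (\<Sum>b<n. \<Sum>d<n. (3 * S j b d) * ((y $ b + s * (if b = i then 1 else 0)) *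
       (y $ d + s * (if d = i then 1 else 0))))"
    proof -
      let ?z = "y + s \<cdot>\<^sub>v unit_vec n i"
      have "pderiv_at n c j ?z = 3 * (\<Sum>b<n. \<Sum>d<n. S j b d * ?z $ b * ?z $ d)" using P1[OF line_carrier[OF y] j] .
      also have "\<dots> = (\<Sum>b<n. \<Sum>d<n. (3 * S j b d) * (?z $ b * ?z $ d))" by (simp add: sum_distrib_left mult_ac)
      also have "\<dots> = (\<Sum>b<n. \<Sum>d<n. (3 * S j b d) * ((y $ b + s * (if b = i then 1 else 0)) *
       (y $ d + s * (if d = i then 1 else 0))))" using y by (intro sum.cong refl) (simp add: unit_vec_def)
      finally show ?thesis .
    qed
  next
    have "((\<lambda>s. \<Sum>b<n. \<Sum>d<n. (3 * S j b d) * ((y $ b + s * (if b = i then 1 else 0)) *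
       (y $ d + s * (if d = i then 1 else 0)))) has_real_derivative 2 * (\<Sum>d<n. (3 * S j i d) * y $ d)) (at 0)"
      by (rule deriv_quad[OF i]) (use s2 in auto)
    moreover have "2 * (\<Sum>d<n. (3 * S j i d) * y $ d) = 6 * (\<Sum>d<n. S i j d * y $ d)"
      using s1 by (simp add: sum_distrib_left mult_ac)
    ultimately show "((\<lambda>s. \<Sum>b<n. \<Sum>d<n. (3 * S j b d) * ((y $ b + s * (if b = i then 1 else 0)) *
       (y $ d + s * (if d = i then 1 else 0)))) has_real_derivative 6 * (\<Sum>d<n. S i j d * y $ d)) (at 0)" by simp
  qed
  have P3: "pd3 n c i j k y = 6 * S j k i" if y: "y \<in> carrier_vec n" and i: "i < n" and j: "j < n" and k: "k < n" for y i j k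
    unfolding pd3_def
  proof (rule pderiv_eq)
    fix s
    show "pd2 n c j k (y + s \<cdot>\<^sub>v unit_vec n i) = (\<Sum>d<n. (6 * S j k d) * (y $ d + s * (if d = i then 1 else 0)))"
    proof -
      let ?z = "y + s \<cdot>\<^sub>v unit_vec n i"
      have "pd2 n c j k ?z = 6 * (\<Sum>d<n. S j k d * ?z $ d)" using P2[OF line_carrier[OF y] j k] .
      also have "\<dots> = (\<Sum>d<n. (6 * S j k d) * ?z $ d)" by (simp add: sum_distrib_left mult_ac)
      also have "\<dots> = (\<Sum>d<n. (6 * S j k d) * (y $ d + s * (if d = i then 1 else 0)))"
        using y by (intro sum.cong refl) (simp add: unit_vec_def)
      finally show ?thesis .
    qed
  qed (rule deriv_lin[OF i])
  define Sig where "Sig = {\<bar>pd3 n c i j k (0\<^sub>v n)\<bar> | i j k. i < n \<and> j < n \<and> k < n}"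
  define K where "K = cnorm n c"
  have KS: "K = (1/6) * Max Sig" unfolding K_def cnorm_def Sig_def ..
  have fin: "finite Sig"
  proof (rule finite_subset)
    show "Sig \<subseteq> (\<lambda>(i,j,k). \<bar>pd3 n c i j k (0\<^sub>v n)\<bar>) ` ({..<n} \<times> {..<n} \<times> {..<n})"
    proof
      fix z assume "z \<in> Sig"
      then obtain i j k where z: "z = \<bar>pd3 n c i j k (0\<^sub>v n)\<bar>" "i < n" "j < n" "k < n" unfolding Sig_def by blast
      show "z \<in> (\<lambda>(i,j,k). \<bar>pd3 n c i j k (0\<^sub>v n)\<bar>) ` ({..<n} \<times> {..<n} \<times> {..<n})"
        by (rule image_eqI[of _ _ "(i,j,k)"]) (use z in auto)
    qed
  qed simp
  have bnd: "\<bar>S a b d\<bar> \<le> K" if "a < n" "b < n" "d < n" for a b d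
  proof -
    have "\<bar>pd3 n c d a b (0\<^sub>v n)\<bar> \<in> Sig" unfolding Sig_def using that by blast
    hence "\<bar>pd3 n c d a b (0\<^sub>v n)\<bar> \<le> Max Sig" using fin by simp
    moreover have "pd3 n c d a b (0\<^sub>v n) = 6 * S a b d" using P3[of "0\<^sub>v n" d a b] that by simp
    ultimately show ?thesis unfolding KS by simp
  qed
  have "\<exists>a<n. \<exists>b<n. \<exists>d<n. S a b d \<noteq> 0"
  proof (rule ccontr)
    assume "\<not> ?thesis"
    hence z: "\<And>a b d. a < n \<Longrightarrow> b < n \<Longrightarrow> d < n \<Longrightarrow> S a b d = 0" by blast
    obtain x where x: "x \<in> carrier_vec n" "c x \<noteq> 0" using nz by blast
    have "c x = 0" using cx[OF x(1)] z by simp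
    thus False using x by simp
  qed
  then obtain a b d where abd: "a < n" "b < n" "d < n" "S a b d \<noteq> 0" by blast
  have Kpos: "K > 0" using bnd[OF abd(1-3)] abd(4) by simp
  have H: "hess n c x $$ (i,j) = 6 * (\<Sum>l<n. S i j l * x $ l) / K" if "x \<in> carrier_vec n" "i < n" "j < n" for x i j
    unfolding hess_def K_def using P2[OF that] that by simp
  show ?thesis using sym Kpos bnd H by blast
qed

lemma jac_ddet:
  assumes H: "\<forall>x\<in>carrier_vec n. \<forall>i<n. \<forall>j<n. hess n c x $$ (i,j) = 6 * (\<Sum>l<n. S i j l * x $ l) / K"
    and x0: "x0 \<in> carrier_vec n" and t: "t \<in> carrier_vec n" and IJ: "(I,J) \<in> minor_idx n k"
  shows "(\<Sum>l<n. pderiv_at n (Delta n c I J) l x0 * t $ l) =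
    ddet k (\<lambda>i j. hess n c x0 $$ (pick I i, pick J j)) (\<lambda>i j. hess n c t $$ (pick I i, pick J j))"
proof -
  have I: "I \<subseteq> {..<n}" "card I = k" and J: "J \<subseteq> {..<n}" "card J = k" using IJ unfolding minor_idx_def by auto
  have pI: "pick I i < n" if "i < k" for i using pick_in_set[of i I] I that by auto
  have pJ: "pick J i < n" if "i < k" for i using pick_in_set[of i J] J that by auto
  have cI: "{i. i < n \<and> i \<in> I} = I" and cJ: "{i. i < n \<and> i \<in> J} = J" using I J by auto
  have sub: "Delta n c I J y = det (mat k k (\<lambda>(i,j). hess n c y $$ (pick I i, pick J j)))" for y
    unfolding Delta_def submatrix_def using cI cJ I J by (simp add: hess_def)
  define G where "G l a b = 6 * S a b l / K" for l a b
  let ?e0 = "\<lambda>i j. hess n c x0 $$ (pick I i, pick J j)"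
  have hl: "hess n c (x0 + s \<cdot>\<^sub>v unit_vec n l) $$ (a,b) = hess n c x0 $$ (a,b) + s * G l a b"
    if "l < n" "a < n" "b < n" for s l a b
  proof -
    have "hess n c (x0 + s \<cdot>\<^sub>v unit_vec n l) $$ (a,b) = 6 * (\<Sum>d<n. S a b d * (x0 + s \<cdot>\<^sub>v unit_vec n l) $ d) / K"
      using H line_carrier[OF x0, of s l] that by blast
    also have "(\<Sum>d<n. S a b d * (x0 + s \<cdot>\<^sub>v unit_vec n l) $ d) = (\<Sum>d<n. S a b d * (x0 $ d + s * (if d = l then 1 else 0)))"
      using x0 by (intro sum.cong refl) (simp add: unit_vec_def)
    also have "(\<Sum>d<n. S a b d * (x0 $ d + s * (if d = l then 1 else 0))) = (\<Sum>d<n. S a b d * x0 $ d) + s * S a b l"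
    proof -
      have "(\<Sum>d<n. S a b d * (x0 $ d + s * (if d = l then 1 else 0))) = (\<Sum>d<n. S a b d * x0 $ d) + (\<Sum>d<n. (if d = l then 1 else 0) * (s * S a b d))"
        by (simp add: sum.distrib algebra_simps)
      thus ?thesis using delta_sum[OF that(1), of "\<lambda>d. s * S a b d"] by simp
    qed
    also have "6 * ((\<Sum>d<n. S a b d * x0 $ d) + s * S a b l) / K = hess n c x0 $$ (a,b) + s * G l a b"
      using H x0 that unfolding G_def by (simp add: add_divide_distrib)
    finally show ?thesis .
  qed
  have d: "pderiv_at n (Delta n c I J) l x0 = ddet k ?e0 (\<lambda>i j. G l (pick I i) (pick J j))" if l: "l < n" for l
  proof (rule pderiv_eq)
    fix s
    show "Delta n c I J (x0 + s \<cdot>\<^sub>v unit_vec n l) = det (mat k k (\<lambda>(i,j). ?e0 i j + s * G l (pick I i) (pick J j)))"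
      unfolding sub by (rule arg_cong[of _ _ det], rule eq_matI) (auto simp: hl[OF l] pI pJ)
  qed (rule ddet_deriv)
  have "(\<Sum>l<n. pderiv_at n (Delta n c I J) l x0 * t $ l) = (\<Sum>l<n. t $ l * ddet k ?e0 (\<lambda>i j. G l (pick I i) (pick J j)))"
    using d by (simp add: mult.commute)
  also have "\<dots> = ddet k ?e0 (\<lambda>i j. \<Sum>l<n. t $ l * G l (pick I i) (pick J j))"
    by (rule ddet_lin[symmetric]) simp
  also have "(\<lambda>i j. \<Sum>l<n. t $ l * G l (pick I i) (pick J j)) = (\<lambda>i j. if i < k \<and> j < k then hess n c t $$ (pick I i, pick J j) else \<Sum>l<n. t $ l * G l (pick I i) (pick J j))"
  proof (intro ext)
    fix i j
    show "(\<Sum>l<n. t $ l * G l (pick I i) (pick J j)) = (if i < k \<and> j < k then hess n c t $$ (pick I i, pick J j) else \<Sum>l<n. t $ l * G l (pick I i) (pick J j))"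
      using H t pI pJ unfolding G_def by (auto simp: sum_divide_distrib sum_distrib_left mult_ac)
  qed
  also have "ddet k ?e0 (\<lambda>i j. if i < k \<and> j < k then hess n c t $$ (pick I i, pick J j) else \<Sum>l<n. t $ l * G l (pick I i) (pick J j))
     = ddet k ?e0 (\<lambda>i j. hess n c t $$ (pick I i, pick J j))"
    unfolding ddet_def
  proof (rule sum.cong[OF refl])
    fix p assume "p \<in> {p. p permutes {0..<k}}"
    hence pk: "\<And>i. i < k \<Longrightarrow> p i < k" by (metis atLeastLessThan_iff mem_Collect_eq permutes_in_image zero_le)
    show "signof p * (\<Sum>i\<in>{0..<k}. (if i < k \<and> p i < k then hess n c t $$ (pick I i, pick J (p i)) else \<Sum>l<n. t $ l * G l (pick I i) (pick J (p i))) * (\<Prod>j\<in>{0..<k} - {i}. ?e0 j (p j))) =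
          signof p * (\<Sum>i\<in>{0..<k}. hess n c t $$ (pick I i, pick J (p i)) * (\<Prod>j\<in>{0..<k} - {i}. ?e0 j (p j)))"
      using pk by (auto intro!: sum.cong)
  qed
  finally show ?thesis .
qed


lemma eig_decomp:
  fixes H0 :: "real mat"
  assumes H0: "H0 \<in> carrier_mat n n" and sym: "\<And>i j. i < n \<Longrightarrow> j < n \<Longrightarrow> H0 $$ (i,j) = H0 $$ (j,i)"
    and cp: "char_poly H0 = (\<Prod>a\<leftarrow>ls. [:-a,1:])"
  shows "\<exists>Q \<in> carrier_mat n n. (\<forall>i<n. \<forall>j<n. (\<Sum>a<n. Q $$ (a,i) * Q $$ (a,j)) = (if i = j then 1 else 0)) \<and>
     (\<forall>a<n. \<forall>c<n. H0 $$ (a,c) = (\<Sum>l<n. Q $$ (a,l) * ls ! l * Q $$ (c,l)))"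
proof -
  have symT: "transpose_mat H0 = H0" by (rule eq_matI) (use H0 sym in auto)
  obtain Q where Q: "Q \<in> carrier_mat n n" and QQ: "transpose_mat Q * Q = 1\<^sub>m n"
    and D: "transpose_mat Q * H0 * Q = diagl ls n"
    using spectral[OF H0 symT cp] by blast
  have QT: "transpose_mat Q \<in> carrier_mat n n" using Q by simp
  have QQ': "Q * transpose_mat Q = 1\<^sub>m n" using mat_mult_left_right_inverse[OF QT Q QQ] .
  have O1: "(\<Sum>a<n. Q $$ (a,i) * Q $$ (a,j)) = (if i = j then 1 else 0)" if "i < n" "j < n" for i j
  proof -
    have "(transpose_mat Q * Q) $$ (i,j) = (\<Sum>a<n. Q $$ (a,i) * Q $$ (a,j))"
      using Q that by (simp add: scalar_prod_def lessThan_atLeast0)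
    thus ?thesis using QQ that by simp
  qed
  have Dc: "diagl ls n \<in> carrier_mat n n" unfolding diagl_def by simp
  have "H0 = Q * (diagl ls n * transpose_mat Q)"
  proof -
    have "Q * (diagl ls n * transpose_mat Q) = Q * ((transpose_mat Q * H0 * Q) * transpose_mat Q)" using D by simp
    also have "\<dots> = (Q * transpose_mat Q) * H0 * (Q * transpose_mat Q)"
      using Q QT H0 by (simp add: assoc_mult_mat[of _ n n _ n _ n])
    also have "\<dots> = H0" using QQ' H0 by simp
    finally show ?thesis by simp
  qed
  moreover have "(Q * (diagl ls n * transpose_mat Q)) $$ (a,c) = (\<Sum>l<n. Q $$ (a,l) * ls ! l * Q $$ (c,l))"
    if "a < n" "c < n" for a c
  proof -
    have "(Q * (diagl ls n * transpose_mat Q)) $$ (a,c) = (\<Sum>l<n. Q $$ (a,l) * (\<Sum>m<n. diagl ls n $$ (l,m) * Q $$ (c,m)))"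
      using Q Dc that by (simp add: scalar_prod_def lessThan_atLeast0)
    also have "\<dots> = (\<Sum>l<n. Q $$ (a,l) * ls ! l * Q $$ (c,l))"
    proof (rule sum.cong[OF refl])
      fix l assume l: "l \<in> {..<n}"
      have "(\<Sum>m<n. diagl ls n $$ (l,m) * Q $$ (c,m)) = (\<Sum>m<n. (if m = l then ls ! l * Q $$ (c,m) else 0))"
        using l by (intro sum.cong refl) (auto simp: diagl_def)
      also have "\<dots> = ls ! l * Q $$ (c,l)" using l by (subst sum.delta) auto
      finally show "Q $$ (a,l) * (\<Sum>m<n. diagl ls n $$ (l,m) * Q $$ (c,m)) = Q $$ (a,l) * ls ! l * Q $$ (c,l)" by simp
    qed
    finally show ?thesis .
  qed
  ultimately show ?thesis using Q O1 by (intro bexI[of _ Q]) auto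
qed


lemma supnorm_ge:
  assumes "v \<in> carrier_vec n" "a < n"
  shows "\<bar>v $ a\<bar> \<le> supnorm v"
proof -
  have fin: "finite {\<bar>v $ i\<bar> | i. i < dim_vec v}" by simp
  show ?thesis unfolding supnorm_def using assms by (intro Max_ge[OF fin]) auto
qed

lemma supnorm_nonneg:
  assumes "v \<in> carrier_vec n" "0 < n"
  shows "0 \<le> supnorm v"
  using supnorm_ge[OF assms] by linarith

lemma finite_minor_idx: "finite (minor_idx n k)"
proof (rule finite_subset)
  show "minor_idx n k \<subseteq> Pow {..<n} \<times> Pow {..<n}" unfolding minor_idx_def by auto
qed simp

lemma set_img: "{g I J | I J. (I,J) \<in> X} = (\<lambda>(I,J). g I J) ` X"
  by auto

lemma Max_minor_ge:
  assumes "(I,J) \<in> minor_idx n k"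
  shows "(g I J :: real) \<le> Max {g I J | I J. (I,J) \<in> minor_idx n k}"
  unfolding set_img using assms finite_minor_idx by (intro Max_ge) (auto intro!: image_eqI[of _ _ "(I,J)"])

lemma minor_idx_ne: "k \<le> n \<Longrightarrow> ({..<k},{..<k}) \<in> minor_idx n k"
  unfolding minor_idx_def by auto

lemma Max_minor_le:
  assumes "k \<le> n" "\<And>I J. (I,J) \<in> minor_idx n k \<Longrightarrow> (g I J :: real) \<le> B"
  shows "Max {g I J | I J. (I,J) \<in> minor_idx n k} \<le> B"
  unfolding set_img using assms finite_minor_idx minor_idx_ne[OF assms(1)]
  by (subst Max_le_iff) auto

lemma Delta_eq:
  assumes IJ: "(I,J) \<in> minor_idx n k"
  shows "Delta n c I J y = det (mat k k (\<lambda>(i,j). hess n c y $$ (pick I i, pick J j)))"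
proof -
  have I: "I \<subseteq> {..<n}" "card I = k" and J: "J \<subseteq> {..<n}" "card J = k" using IJ unfolding minor_idx_def by auto
  have cI: "{i. i < n \<and> i \<in> I} = I" and cJ: "{i. i < n \<and> i \<in> J} = J" using I J by auto
  show ?thesis unfolding Delta_def submatrix_def using cI cJ I J by (simp add: hess_def)
qed

lemma pick_lt:
  assumes IJ: "(I,J) \<in> minor_idx n k" and i: "i < k"
  shows "pick I i < n" "pick J i < n"
proof -
  have I: "I \<subseteq> {..<n}" "card I = k" and J: "J \<subseteq> {..<n}" "card J = k" using IJ unfolding minor_idx_def by auto
  show "pick I i < n" using pick_in_set[of i I] I i by auto
  show "pick J i < n" using pick_in_set[of i J] J i by auto
qed

lemma prod_abs_le1:
  assumes "\<And>i. i \<in> A \<Longrightarrow> \<bar>f i :: real\<bar> \<le> 1"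
  shows "\<bar>\<Prod>i\<in>A. f i\<bar> \<le> 1"
  unfolding abs_prod using assms by (intro prod_le_1) auto

lemma minor_bound:
  fixes Q :: "real mat" and ls :: "real list"
  assumes Qb: "\<And>a l. a < n \<Longrightarrow> l < n \<Longrightarrow> \<bar>Q $$ (a,l)\<bar> \<le> 1"
    and EV: "\<And>a c. a < n \<Longrightarrow> c < n \<Longrightarrow> hess n c0 x0 $$ (a,c) = (\<Sum>l<n. Q $$ (a,l) * ls ! l * Q $$ (c,l))"
    and ls: "length ls = n" "sorted_wrt (\<lambda>a b. \<bar>b\<bar> \<le> \<bar>a\<bar>) ls"
    and IJ: "(I,J) \<in> minor_idx n b" and bn: "b \<le> n"
  shows "\<bar>Delta n c0 I J x0\<bar> \<le> fact b * real (card (FF b n))^2 * (\<Prod>i<b. \<bar>ls ! i\<bar>)"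
proof -
  define u where "u a i = Q $$ (pick I i, a)" for a i
  define v where "v c j = Q $$ (pick J j, c)" for c j
  define L where "L a c = (if a = c then ls ! a else 0)" for a c
  have e: "hess n c0 x0 $$ (pick I i, pick J j) = (\<Sum>a<n. \<Sum>c<n. u a i * L a c * v c j)" if "i < b" "j < b" for i j
  proof -
    have "(\<Sum>a<n. \<Sum>c<n. u a i * L a c * v c j) = (\<Sum>a<n. \<Sum>c<n. if c = a then u a i * ls ! a * v a j else 0)"
      unfolding L_def by (intro sum.cong refl) auto
    also have "\<dots> = (\<Sum>a<n. u a i * ls ! a * v a j)" by (simp add: sum.delta)
    finally show ?thesis unfolding u_def v_def using EV pick_lt[OF IJ that(1)] pick_lt[OF IJ that(2)] by simp
  qed
  have "Delta n c0 I J x0 = det (mat b b (\<lambda>(i,j). \<Sum>a<n. \<Sum>c<n. u a i * L a c * v c j))"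
    unfolding Delta_eq[OF IJ] by (rule arg_cong[of _ _ det], rule eq_matI) (auto simp: e)
  also have "\<dots> = (\<Sum>f\<in>FF b n. \<Sum>g\<in>FF b n. (\<Prod>i<b. u (f i) i) * (\<Prod>j<b. v (g j) j) * det (mat b b (\<lambda>(i,j). L (f i) (g j))))"
    by (rule det_expand)
  finally have D: "Delta n c0 I J x0 = \<dots>" .
  have bnd: "\<bar>(\<Prod>i<b. u (f i) i) * (\<Prod>j<b. v (g j) j) * det (mat b b (\<lambda>(i,j). L (f i) (g j)))\<bar> \<le> fact b * (\<Prod>i<b. \<bar>ls ! i\<bar>)"
    if f: "f \<in> FF b n" and g: "g \<in> FF b n" for f g
  proof -
    have fr: "\<And>i. i < b \<Longrightarrow> f i < n" using f unfolding FF_def by auto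
    have gr: "\<And>i. i < b \<Longrightarrow> g i < n" using g unfolding FF_def by auto
    have pu: "\<bar>\<Prod>i<b. u (f i) i\<bar> \<le> 1" unfolding u_def
      by (rule prod_abs_le1) (use Qb pick_lt[OF IJ] fr in auto)
    have pv: "\<bar>\<Prod>j<b. v (g j) j\<bar> \<le> 1" unfolding v_def
      by (rule prod_abs_le1) (use Qb pick_lt[OF IJ] gr in auto)
    have fl: "f \<in> FF b (length ls)" using f ls by simp
    have pd: "\<bar>det (mat b b (\<lambda>(i,j). L (f i) (g j)))\<bar> \<le> fact b * (\<Prod>i<b. \<bar>ls ! i\<bar>)"
      unfolding L_def using det_diag_bound[OF ls(2) fl, of g] by simp
    have "\<bar>(\<Prod>i<b. u (f i) i) * (\<Prod>j<b. v (g j) j) * det (mat b b (\<lambda>(i,j). L (f i) (g j)))\<bar>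
      = \<bar>\<Prod>i<b. u (f i) i\<bar> * \<bar>\<Prod>j<b. v (g j) j\<bar> * \<bar>det (mat b b (\<lambda>(i,j). L (f i) (g j)))\<bar>"
      by (simp add: abs_mult)
    also have "\<dots> \<le> 1 * 1 * (fact b * (\<Prod>i<b. \<bar>ls ! i\<bar>))"
      by (intro mult_mono pu pv pd) auto
    finally show ?thesis by simp
  qed
  have "\<bar>Delta n c0 I J x0\<bar> \<le> (\<Sum>f\<in>FF b n. \<Sum>g\<in>FF b n. \<bar>(\<Prod>i<b. u (f i) i) * (\<Prod>j<b. v (g j) j) * det (mat b b (\<lambda>(i,j). L (f i) (g j)))\<bar>)"
    unfolding D by (rule order.trans[OF sum_abs], rule sum_mono, rule sum_abs)
  also have "\<dots> \<le> (\<Sum>f\<in>FF b n. \<Sum>g\<in>FF b n. fact b * (\<Prod>i<b. \<bar>ls ! i\<bar>))"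
    by (intro sum_mono bnd)
  also have "\<dots> = fact b * real (card (FF b n))^2 * (\<Prod>i<b. \<bar>ls ! i\<bar>)"
    by (simp add: power2_eq_square)
  finally show ?thesis .
qed


lemma ddet_cong:
  assumes "\<And>i j. i < k \<Longrightarrow> j < k \<Longrightarrow> e0 i j = e0' i j"
  shows "ddet k e0 e1 = ddet k e0' e1"
  unfolding ddet_def
proof (rule sum.cong[OF refl])
  fix p assume "p \<in> {p. p permutes {0..<k}}"
  hence pk: "\<And>i. i < k \<Longrightarrow> p i < k" by (metis atLeastLessThan_iff mem_Collect_eq permutes_in_image zero_le)
  show "signof p * (\<Sum>i\<in>{0..<k}. e1 i (p i) * (\<Prod>j\<in>{0..<k} - {i}. e0 j (p j))) =
        signof p * (\<Sum>i\<in>{0..<k}. e1 i (p i) * (\<Prod>j\<in>{0..<k} - {i}. e0' j (p j)))"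
    using assms pk by (auto intro!: sum.cong prod.cong)
qed

lemma swap3:
  fixes U V :: "nat \<Rightarrow> real"
  shows "(\<Sum>a<n. \<Sum>c<n. U a * (\<Sum>l<n. Q a l * d l * Q c l) * V c) =
    (\<Sum>l<n. d l * (\<Sum>a<n. U a * Q a l) * (\<Sum>c<n. V c * Q c l))"
proof -
  have "(\<Sum>a<n. \<Sum>c<n. U a * (\<Sum>l<n. Q a l * d l * Q c l) * V c) = (\<Sum>a<n. \<Sum>c<n. \<Sum>l<n. U a * Q a l * d l * Q c l * V c)"
    by (simp add: sum_distrib_left sum_distrib_right mult_ac)
  also have "\<dots> = (\<Sum>a<n. \<Sum>l<n. \<Sum>c<n. U a * Q a l * d l * Q c l * V c)"
    by (rule sum.cong[OF refl], rule sum.swap)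
  also have "\<dots> = (\<Sum>l<n. \<Sum>a<n. \<Sum>c<n. U a * Q a l * d l * Q c l * V c)"
    by (rule sum.swap)
  also have "\<dots> = (\<Sum>l<n. d l * (\<Sum>a<n. U a * Q a l) * (\<Sum>c<n. V c * Q c l))"
    by (simp add: sum_distrib_left sum_distrib_right mult_ac)
  finally show ?thesis .
qed

lemma bordered:
  fixes Q :: "real mat" and ls :: "real list" and H0 H1 :: "nat \<Rightarrow> nat \<Rightarrow> real" and z z' Y Y' :: "nat \<Rightarrow> real"
  assumes O1: "\<And>i j. i < n \<Longrightarrow> j < n \<Longrightarrow> (\<Sum>a<n. Q $$ (a,i) * Q $$ (a,j)) = (if i = j then 1 else 0)"
    and EV: "\<And>a c. a < n \<Longrightarrow> c < n \<Longrightarrow> H0 a c = (\<Sum>l<n. Q $$ (a,l) * ls ! l * Q $$ (c,l))"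
    and ls: "length ls = n" "sorted_wrt (\<lambda>a b. \<bar>b\<bar> \<le> \<bar>a\<bar>) ls"
    and bn: "b + 1 \<le> n" and b1: "1 \<le> b"
    and Ydef: "\<And>a. a < n \<Longrightarrow> Y a = (\<Sum>l<n. Q $$ (a,l) * z l)" and z0: "\<And>l. l < b \<Longrightarrow> z l = 0"
    and Ydef': "\<And>a. a < n \<Longrightarrow> Y' a = (\<Sum>l<n. Q $$ (a,l) * z' l)" and z0': "\<And>l. l < b \<Longrightarrow> z' l = 0"
    and H1b: "\<And>a c. a < n \<Longrightarrow> c < n \<Longrightarrow> \<bar>H1 a c\<bar> \<le> h"
    and Jb: "\<And>I J. (I,J) \<in> minor_idx n (b+1) \<Longrightarrow>
        \<bar>ddet (b+1) (\<lambda>i j. H0 (pick I i) (pick J j)) (\<lambda>i j. H1 (pick I i) (pick J j))\<bar> \<le> Jc"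
    and Ys: "\<And>a. a < n \<Longrightarrow> \<bar>Y a\<bar> \<le> yy" and Ys': "\<And>a. a < n \<Longrightarrow> \<bar>Y' a\<bar> \<le> yy'"
    and Ppos: "(\<Prod>i<b. \<bar>ls ! i\<bar>) > 0"
  shows "(\<Prod>i<b. \<bar>ls ! i\<bar>) * \<bar>\<Sum>a<n. \<Sum>c<n. Y a * H1 a c * Y' c\<bar> \<le>
     real (card (FF (b+1) n))^2 * yy * yy' * Jc +
     \<bar>ls ! b\<bar> * (\<Sum>l<n. \<bar>z l\<bar> * \<bar>z' l\<bar>) * (b * (n * n * h)) * (\<Prod>i<b. \<bar>ls ! i\<bar>) / \<bar>ls ! (b - 1)\<bar>"
proof -
  define k where "k = Suc b"
  have kn: "k \<le> n" and bk: "b < k" using bn unfolding k_def by auto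
  have n0: "0 < n" using bn by simp
  define P where "P = (\<Prod>i<b. \<bar>ls ! i\<bar>)"
  have Qb: "\<bar>Q $$ (a,l)\<bar> \<le> 1" if "a < n" "l < n" for a l
  proof -
    have "(Q $$ (a,l))^2 \<le> (\<Sum>a'<n. (Q $$ (a',l))^2)"
      by (rule member_le_sum) (use that in auto)
    also have "\<dots> = 1" using O1[OF that(2) that(2)] by (simp add: power2_eq_square)
    finally have "(Q $$ (a,l))^2 \<le> 1" .
    thus ?thesis using abs_le_square_iff[of "Q $$ (a,l)" 1] by simp
  qed
  have zY: "z l = (\<Sum>a<n. Y a * Q $$ (a,l))" if l: "l < n" for l
  proof -
    have "(\<Sum>a<n. Y a * Q $$ (a,l)) = (\<Sum>a<n. \<Sum>m<n. Q $$ (a,m) * z m * Q $$ (a,l))"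
      using Ydef by (simp add: sum_distrib_right)
    also have "\<dots> = (\<Sum>m<n. \<Sum>a<n. Q $$ (a,m) * z m * Q $$ (a,l))" by (rule sum.swap)
    also have "\<dots> = (\<Sum>m<n. z m * (\<Sum>a<n. Q $$ (a,m) * Q $$ (a,l)))"
      by (simp add: sum_distrib_left mult_ac)
    also have "\<dots> = (\<Sum>m<n. if m = l then z m else 0)" using O1 l by (intro sum.cong refl) auto
    also have "\<dots> = z l" using l by (subst sum.delta) auto
    finally show ?thesis by simp
  qed
  have zY': "z' l = (\<Sum>a<n. Y' a * Q $$ (a,l))" if l: "l < n" for l
  proof -
    have "(\<Sum>a<n. Y' a * Q $$ (a,l)) = (\<Sum>a<n. \<Sum>m<n. Q $$ (a,m) * z' m * Q $$ (a,l))"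
      using Ydef' by (simp add: sum_distrib_right)
    also have "\<dots> = (\<Sum>m<n. \<Sum>a<n. Q $$ (a,m) * z' m * Q $$ (a,l))" by (rule sum.swap)
    also have "\<dots> = (\<Sum>m<n. z' m * (\<Sum>a<n. Q $$ (a,m) * Q $$ (a,l)))"
      by (simp add: sum_distrib_left mult_ac)
    also have "\<dots> = (\<Sum>m<n. if m = l then z' m else 0)" using O1 l by (intro sum.cong refl) auto
    also have "\<dots> = z' l" using l by (subst sum.delta) auto
    finally show ?thesis by simp
  qed
  define u where "u a i = (if i < b then Q $$ (a,i) else Y a)" for a i
  define v where "v c j = (if j < b then Q $$ (c,j) else Y' c)" for c j
  define N0 where "N0 i j = (\<Sum>a<n. \<Sum>c<n. u a i * H0 a c * v c j)" for i j
  define N1 where "N1 i j = (\<Sum>a<n. \<Sum>c<n. u a i * H1 a c * v c j)" for i j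
  define \<gamma> where "\<gamma> = (\<Sum>l<n. ls ! l * z l * z' l)"
  define d where "d i = (if i < b then ls ! i else \<gamma>)" for i
  have wQ: "(\<Sum>a<n. Q $$ (a,i) * Q $$ (a,l)) = (if i = l then 1 else 0)" if "i < n" "l < n" for i l
    using O1 that by simp
  have N0d: "N0 i j = (if i = j then d i else 0)" if ij: "i < k" "j < k" for i j
  proof -
    have "N0 i j = (\<Sum>l<n. ls ! l * (\<Sum>a<n. u a i * Q $$ (a,l)) * (\<Sum>c<n. v c j * Q $$ (c,l)))"
      unfolding N0_def
    proof -
      have "(\<Sum>a<n. \<Sum>c<n. u a i * H0 a c * v c j) = (\<Sum>a<n. \<Sum>c<n. u a i * (\<Sum>l<n. Q $$ (a,l) * ls ! l * Q $$ (c,l)) * v c j)"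
        using EV by (intro sum.cong refl) auto
      also have "\<dots> = (\<Sum>l<n. ls ! l * (\<Sum>a<n. u a i * Q $$ (a,l)) * (\<Sum>c<n. v c j * Q $$ (c,l)))"
        by (rule swap3)
      finally show "(\<Sum>a<n. \<Sum>c<n. u a i * H0 a c * v c j) = (\<Sum>l<n. ls ! l * (\<Sum>a<n. u a i * Q $$ (a,l)) * (\<Sum>c<n. v c j * Q $$ (c,l)))" .
    qed
    also have "\<dots> = (\<Sum>l<n. ls ! l * (if i < b then (if i = l then 1 else 0) else z l) * (if j < b then (if j = l then 1 else 0) else z' l))"
    proof (rule sum.cong[OF refl])
      fix l assume l: "l \<in> {..<n}"
      have "(\<Sum>a<n. u a i * Q $$ (a,l)) = (if i < b then (if i = l then 1 else 0) else z l)"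
        unfolding u_def using wQ[of i l] zY[of l] l bn by auto
      moreover have "(\<Sum>c<n. v c j * Q $$ (c,l)) = (if j < b then (if j = l then 1 else 0) else z' l)"
        unfolding v_def using wQ[of j l] zY'[of l] l bn by auto
      ultimately show "ls ! l * (\<Sum>a<n. u a i * Q $$ (a,l)) * (\<Sum>c<n. v c j * Q $$ (c,l)) =
          ls ! l * (if i < b then (if i = l then 1 else 0) else z l) * (if j < b then (if j = l then 1 else 0) else z' l)" by simp
    qed
    also have "\<dots> = (if i = j then d i else 0)"
    proof (cases "i < b")
      case ib: True
      have "(\<Sum>l<n. ls ! l * (if i < b then (if i = l then 1 else 0) else z l) * (if j < b then (if j = l then 1 else 0) else z' l))
          = (\<Sum>l<n. if l = i then ls ! l * (if j < b then (if j = l then 1 else 0) else z' l) else 0)"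
        using ib by (intro sum.cong refl) auto
      also have "\<dots> = ls ! i * (if j < b then (if j = i then 1 else 0) else z' i)"
        using ib bn by (subst sum.delta) auto
      also have "\<dots> = (if i = j then d i else 0)" using ib z0' unfolding d_def by auto
      finally show ?thesis .
    next
      case ib: False
      hence ib': "i = b" using ij unfolding k_def by simp
      show ?thesis
      proof (cases "j < b")
        case jb: True
        have "(\<Sum>l<n. ls ! l * (if i < b then (if i = l then 1 else 0) else z l) * (if j < b then (if j = l then 1 else 0) else z' l))
          = (\<Sum>l<n. if l = j then ls ! l * z l else 0)"
          using ib jb by (intro sum.cong refl) auto
        also have "\<dots> = ls ! j * z j" using jb bn by (subst sum.delta) auto
        also have "\<dots> = 0" using z0 jb by simp
        finally show ?thesis using ib' jb by simp
      next
        case jb: False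
        hence "j = b" using ij unfolding k_def by simp
        thus ?thesis using ib ib' jb unfolding d_def \<gamma>_def by (auto intro!: sum.cong)
      qed
    qed
    finally show ?thesis .
  qed
  have kS: "{0..<k} = insert b {0..<b}" unfolding k_def by auto
  have dd: "ddet k N0 N1 = N1 b b * (\<Prod>j<b. ls ! j) + \<gamma> * (\<Sum>i<b. N1 i i * (\<Prod>j\<in>{0..<b}-{i}. ls ! j))"
  proof -
    have "ddet k N0 N1 = ddet k (\<lambda>i j. if i = j then d i else 0) N1"
      by (rule ddet_cong) (use N0d in auto)
    also have "\<dots> = (\<Sum>i\<in>{0..<k}. N1 i i * (\<Prod>j\<in>{0..<k}-{i}. d j))" by (rule ddet_diag)
    also have "\<dots> = N1 b b * (\<Prod>j\<in>{0..<b}. d j) + (\<Sum>i\<in>{0..<b}. N1 i i * (\<Prod>j\<in>insert b {0..<b}-{i}. d j))"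
      unfolding kS by (subst sum.insert) (auto simp: insert_Diff_if)
    also have "(\<Prod>j\<in>{0..<b}. d j) = (\<Prod>j<b. ls ! j)" unfolding d_def by (auto simp: lessThan_atLeast0 intro!: prod.cong)
    also have "(\<Sum>i\<in>{0..<b}. N1 i i * (\<Prod>j\<in>insert b {0..<b}-{i}. d j)) = \<gamma> * (\<Sum>i<b. N1 i i * (\<Prod>j\<in>{0..<b}-{i}. ls ! j))"
    proof -
      have "\<And>i. i \<in> {0..<b} \<Longrightarrow> (\<Prod>j\<in>insert b {0..<b}-{i}. d j) = \<gamma> * (\<Prod>j\<in>{0..<b}-{i}. ls ! j)"
      proof -
        fix i assume i: "i \<in> {0..<b}"
        have "insert b {0..<b} - {i} = insert b ({0..<b} - {i})" using i by auto
        hence "(\<Prod>j\<in>insert b {0..<b}-{i}. d j) = d b * (\<Prod>j\<in>{0..<b}-{i}. d j)" by simp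
        also have "(\<Prod>j\<in>{0..<b}-{i}. d j) = (\<Prod>j\<in>{0..<b}-{i}. ls ! j)" unfolding d_def by (auto intro!: prod.cong)
        finally show "(\<Prod>j\<in>insert b {0..<b}-{i}. d j) = \<gamma> * (\<Prod>j\<in>{0..<b}-{i}. ls ! j)" unfolding d_def by simp
      qed
      hence "(\<Sum>i\<in>{0..<b}. N1 i i * (\<Prod>j\<in>insert b {0..<b}-{i}. d j)) = (\<Sum>i\<in>{0..<b}. \<gamma> * (N1 i i * (\<Prod>j\<in>{0..<b}-{i}. ls ! j)))"
        by (intro sum.cong refl) (simp add: mult_ac)
      thus ?thesis by (simp add: sum_distrib_left lessThan_atLeast0)
    qed
    finally show ?thesis .
  qed
  have N1bb: "N1 b b = (\<Sum>a<n. \<Sum>c<n. Y a * H1 a c * Y' c)" unfolding N1_def u_def v_def by simp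
  define Pr where "Pr f g x \<longleftrightarrow> (case x of (e, I, J) \<Rightarrow> (I,J) \<in> minor_idx n k \<and> \<bar>e\<bar> \<le> 1 \<and>
      (\<forall>M. det (mat k k (\<lambda>(i,j). M (f i) (g j))) = e * det (mat k k (\<lambda>(i,j). (M (pick I i) (pick J j) :: real)))))" for f g x
  define sel where "sel f g = (SOME x. Pr f g x)" for f g
  have selP: "Pr f g (sel f g)" if fg: "f \<in> FF k n" "g \<in> FF k n" for f g
  proof -
    obtain e I J where "(I,J) \<in> minor_idx n k" "\<bar>e\<bar> \<le> 1" "\<forall>M. det (mat k k (\<lambda>(i,j). M (f i) (g j))) = e * det (mat k k (\<lambda>(i,j). (M (pick I i) (pick J j) :: real)))"
      using det_fg_pick[OF fg kn] by blast
    hence "Pr f g (e, I, J)" unfolding Pr_def by simp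
    thus ?thesis unfolding sel_def by (rule someI)
  qed
  define E where "E f g = fst (sel f g)" for f g
  define II where "II f g = fst (snd (sel f g))" for f g
  define JJ where "JJ f g = snd (snd (sel f g))" for f g
  have selE: "(II f g, JJ f g) \<in> minor_idx n k" "\<bar>E f g\<bar> \<le> 1"
    "\<And>M. det (mat k k (\<lambda>(i,j). M (f i) (g j))) = E f g * det (mat k k (\<lambda>(i,j). (M (pick (II f g) i) (pick (JJ f g) j) :: real)))"
    if "f \<in> FF k n" "g \<in> FF k n" for f g
    using selP[OF that] unfolding Pr_def E_def II_def JJ_def by (auto split: prod.splits)
  define coef where "coef f g = (\<Prod>i<k. u (f i) i) * (\<Prod>j<k. v (g j) j)" for f g
  define DD where "DD f g = ddet k (\<lambda>i j. H0 (pick (II f g) i) (pick (JJ f g) j)) (\<lambda>i j. H1 (pick (II f g) i) (pick (JJ f g) j))" for f g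
  have feq: "det (mat k k (\<lambda>(i,j). N0 i j + s * N1 i j)) =
     (\<Sum>f\<in>FF k n. \<Sum>g\<in>FF k n. coef f g * (E f g * det (mat k k (\<lambda>(i,j).
        H0 (pick (II f g) i) (pick (JJ f g) j) + s * H1 (pick (II f g) i) (pick (JJ f g) j)))))" for s
  proof -
    have ent: "N0 i j + s * N1 i j = (\<Sum>a<n. \<Sum>c<n. u a i * (H0 a c + s * H1 a c) * v c j)" for i j
    proof -
      have "(\<Sum>a<n. \<Sum>c<n. u a i * (H0 a c + s * H1 a c) * v c j) =
          (\<Sum>a<n. \<Sum>c<n. u a i * H0 a c * v c j + s * (u a i * H1 a c * v c j))"
        by (intro sum.cong refl) (simp add: algebra_simps)
      also have "\<dots> = N0 i j + s * N1 i j" unfolding N0_def N1_def by (simp add: sum.distrib sum_distrib_left)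
      finally show ?thesis by simp
    qed
    have "mat k k (\<lambda>(i,j). N0 i j + s * N1 i j) = mat k k (\<lambda>(i,j). \<Sum>a<n. \<Sum>c<n. u a i * (H0 a c + s * H1 a c) * v c j)"
      by (rule eq_matI) (simp_all only: ent index_mat dim_row_mat dim_col_mat split)
    hence "det (mat k k (\<lambda>(i,j). N0 i j + s * N1 i j)) = (\<Sum>f\<in>FF k n. \<Sum>g\<in>FF k n. (\<Prod>i<k. u (f i) i) * (\<Prod>j<k. v (g j) j) *
        det (mat k k (\<lambda>(i,j). H0 (f i) (g j) + s * H1 (f i) (g j))))"
      using det_expand[where k=k and n=n and u=u and M="\<lambda>a c. H0 a c + s * H1 a c" and v=v] by simp
    also have "\<dots> = (\<Sum>f\<in>FF k n. \<Sum>g\<in>FF k n. coef f g * (E f g * det (mat k k (\<lambda>(i,j).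
        H0 (pick (II f g) i) (pick (JJ f g) j) + s * H1 (pick (II f g) i) (pick (JJ f g) j)))))"
    proof (intro sum.cong refl)
      fix f g assume f: "f \<in> FF k n" and g: "g \<in> FF k n"
      show "(\<Prod>i<k. u (f i) i) * (\<Prod>j<k. v (g j) j) * det (mat k k (\<lambda>(i,j). H0 (f i) (g j) + s * H1 (f i) (g j))) =
        coef f g * (E f g * det (mat k k (\<lambda>(i,j). H0 (pick (II f g) i) (pick (JJ f g) j) + s * H1 (pick (II f g) i) (pick (JJ f g) j))))"
        unfolding coef_def selE(3)[OF f g, of "\<lambda>a c. H0 a c + s * H1 a c"] by simp
    qed
    finally show ?thesis .
  qed
  have D1: "((\<lambda>s. det (mat k k (\<lambda>(i,j). N0 i j + s * N1 i j))) has_real_derivative ddet k N0 N1) (at 0)"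
    by (rule ddet_deriv)
  have D2: "((\<lambda>s. det (mat k k (\<lambda>(i,j). N0 i j + s * N1 i j))) has_real_derivative
      (\<Sum>f\<in>FF k n. \<Sum>g\<in>FF k n. coef f g * (E f g * DD f g))) (at 0)"
    unfolding feq DD_def by (intro DERIV_sum DERIV_cmult ddet_deriv)
  have ddeq: "ddet k N0 N1 = (\<Sum>f\<in>FF k n. \<Sum>g\<in>FF k n. coef f g * (E f g * DD f g))"
    using DERIV_unique[OF D1 D2] .
  have k1: "k = b + 1" unfolding k_def by simp
  have Jc0: "0 \<le> Jc" using Jb[OF minor_idx_ne[of "b+1" n]] bn by linarith
  have h0: "0 \<le> h" using H1b[OF n0 n0] by linarith
  have yy0: "0 \<le> yy" using Ys[OF n0] by linarith
  have yy0': "0 \<le> yy'" using Ys'[OF n0] by linarith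
  have coefb: "\<bar>coef f g\<bar> \<le> yy * yy'" if f: "f \<in> FF k n" and g: "g \<in> FF k n" for f g
  proof -
    have fr: "\<And>i. i < k \<Longrightarrow> f i < n" using f unfolding FF_def by auto
    have gr: "\<And>i. i < k \<Longrightarrow> g i < n" using g unfolding FF_def by auto
    have pu: "\<bar>\<Prod>i<k. u (f i) i\<bar> \<le> yy"
    proof -
      have e: "(\<Prod>i<k. u (f i) i) = (\<Prod>i<b. u (f i) i) * u (f b) b" unfolding k_def by simp
      have a1: "\<bar>\<Prod>i<b. u (f i) i\<bar> \<le> 1"
        by (rule prod_abs_le1) (use Qb fr bn in \<open>auto simp: u_def k_def\<close>)
      have a2: "\<bar>u (f b) b\<bar> \<le> yy" unfolding u_def using Ys fr bk by simp
      have "\<bar>\<Prod>i<k. u (f i) i\<bar> = \<bar>\<Prod>i<b. u (f i) i\<bar> * \<bar>u (f b) b\<bar>" using e by (simp add: abs_mult)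
      also have "\<dots> \<le> 1 * yy" by (rule mult_mono[OF a1 a2]) auto
      finally show ?thesis by simp
    qed
    have pv: "\<bar>\<Prod>j<k. v (g j) j\<bar> \<le> yy'"
    proof -
      have e: "(\<Prod>j<k. v (g j) j) = (\<Prod>j<b. v (g j) j) * v (g b) b" unfolding k_def by simp
      have a1: "\<bar>\<Prod>j<b. v (g j) j\<bar> \<le> 1"
        by (rule prod_abs_le1) (use Qb gr bn in \<open>auto simp: v_def k_def\<close>)
      have a2: "\<bar>v (g b) b\<bar> \<le> yy'" unfolding v_def using Ys' gr bk by simp
      have "\<bar>\<Prod>j<k. v (g j) j\<bar> = \<bar>\<Prod>j<b. v (g j) j\<bar> * \<bar>v (g b) b\<bar>" using e by (simp add: abs_mult)
      also have "\<dots> \<le> 1 * yy'" by (rule mult_mono[OF a1 a2]) auto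
      finally show ?thesis by simp
    qed
    show ?thesis unfolding coef_def abs_mult by (rule mult_mono[OF pu pv]) (use yy0 in auto)
  qed
  have phib: "\<bar>ddet k N0 N1\<bar> \<le> real (card (FF (b+1) n))^2 * yy * yy' * Jc"
  proof -
    have "\<bar>ddet k N0 N1\<bar> \<le> (\<Sum>f\<in>FF k n. \<Sum>g\<in>FF k n. \<bar>coef f g * (E f g * DD f g)\<bar>)"
      unfolding ddeq by (rule order.trans[OF sum_abs], rule sum_mono, rule sum_abs)
    also have "\<dots> \<le> (\<Sum>f\<in>FF k n. \<Sum>g\<in>FF k n. yy * yy' * (1 * Jc))"
    proof (intro sum_mono)
      fix f g assume f: "f \<in> FF k n" and g: "g \<in> FF k n"
      have "\<bar>DD f g\<bar> \<le> Jc" unfolding DD_def using Jb selE(1)[OF f g] k1 by simp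
      hence "\<bar>E f g * DD f g\<bar> \<le> 1 * Jc" unfolding abs_mult
        by (intro mult_mono selE(2)[OF f g]) (use Jc0 in auto)
      thus "\<bar>coef f g * (E f g * DD f g)\<bar> \<le> yy * yy' * (1 * Jc)" unfolding abs_mult[of "coef f g"]
        by (intro mult_mono coefb[OF f g]) (use Jc0 yy0 yy0' in auto)
    qed
    also have "\<dots> = real (card (FF (b+1) n))^2 * yy * yy' * Jc"
      by (simp add: power2_eq_square k1)
    finally show ?thesis .
  qed
  have N1ii: "\<bar>N1 i i\<bar> \<le> n * n * h" if i: "i < b" for i
  proof -
    have "N1 i i = (\<Sum>a<n. \<Sum>c<n. Q $$ (a,i) * H1 a c * Q $$ (c,i))"
      unfolding N1_def u_def v_def using i by simp
    hence "\<bar>N1 i i\<bar> \<le> (\<Sum>a<n. \<Sum>c<n. \<bar>Q $$ (a,i) * H1 a c * Q $$ (c,i)\<bar>)"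
      by (simp only:) (rule order.trans[OF sum_abs], rule sum_mono, rule sum_abs)
    also have "\<dots> \<le> (\<Sum>a<n. \<Sum>c<n. h)"
    proof (intro sum_mono)
      fix a c assume "a \<in> {..<n}" "c \<in> {..<n}"
      hence ac: "a < n" "c < n" by auto
      have "\<bar>Q $$ (a,i) * H1 a c * Q $$ (c,i)\<bar> \<le> 1 * h * 1" unfolding abs_mult
        by (intro mult_mono Qb H1b) (use ac i bn h0 in auto)
      thus "\<bar>Q $$ (a,i) * H1 a c * Q $$ (c,i)\<bar> \<le> h" by simp
    qed
    also have "\<dots> = n * n * h" by simp
    finally show ?thesis .
  qed
  have Pl: "\<bar>\<Prod>j<b. ls ! j\<bar> = P" unfolding P_def by (simp add: abs_prod)
  have lsb1: "0 < \<bar>ls ! (b - 1)\<bar>"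
  proof (rule ccontr)
    assume "\<not> 0 < \<bar>ls ! (b - 1)\<bar>"
    hence "ls ! (b - 1) = 0" by simp
    hence "P = 0" unfolding P_def using b1 by (intro prod_zero) (auto intro!: bexI[of _ "b - 1"])
    thus False using Ppos unfolding P_def[symmetric] by linarith
  qed
  have lsge: "\<bar>ls ! (b - 1)\<bar> \<le> \<bar>ls ! i\<bar>" if i: "i < b" for i
  proof (cases "i = b - 1")
    case True thus ?thesis by simp
  next
    case False
    hence "i < b - 1" using i by simp
    thus ?thesis using sorted_wrt_nth_less[OF ls(2), of i "b - 1"] ls(1) bn by simp
  qed
  have remb: "(\<Prod>j\<in>{0..<b}-{i}. \<bar>ls ! j\<bar>) \<le> P / \<bar>ls ! (b - 1)\<bar>" if i: "i < b" for i
  proof -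
    have "P = \<bar>ls ! i\<bar> * (\<Prod>j\<in>{0..<b}-{i}. \<bar>ls ! j\<bar>)"
      unfolding P_def lessThan_atLeast0 using i by (subst prod.remove[of _ i]) auto
    hence e: "(\<Prod>j\<in>{0..<b}-{i}. \<bar>ls ! j\<bar>) = P / \<bar>ls ! i\<bar>" using lsge[OF i] lsb1 by (simp add: field_simps)
    have "P / \<bar>ls ! i\<bar> \<le> P / \<bar>ls ! (b - 1)\<bar>"
      by (rule divide_left_mono) (use lsge[OF i] lsb1 Ppos P_def in auto)
    thus ?thesis using e by simp
  qed
  have gam: "\<bar>\<gamma>\<bar> \<le> \<bar>ls ! b\<bar> * (\<Sum>l<n. \<bar>z l\<bar> * \<bar>z' l\<bar>)"
  proof -
    have "\<bar>\<gamma>\<bar> \<le> (\<Sum>l<n. \<bar>ls ! l * z l * z' l\<bar>)" unfolding \<gamma>_def by (rule sum_abs)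
    also have "\<dots> \<le> (\<Sum>l<n. \<bar>ls ! b\<bar> * (\<bar>z l\<bar> * \<bar>z' l\<bar>))"
    proof (rule sum_mono)
      fix l assume l: "l \<in> {..<n}"
      show "\<bar>ls ! l * z l * z' l\<bar> \<le> \<bar>ls ! b\<bar> * (\<bar>z l\<bar> * \<bar>z' l\<bar>)"
      proof (cases "l < b")
        case True thus ?thesis using z0 by simp
      next
        case False
        have "\<bar>ls ! l\<bar> \<le> \<bar>ls ! b\<bar>"
        proof (cases "l = b")
          case False' : False
          hence "b < l" using \<open>\<not> l < b\<close> by simp
          thus ?thesis using sorted_wrt_nth_less[OF ls(2), of b l] ls(1) l by simp
        qed simp
        thus ?thesis unfolding abs_mult by (simp add: mult_right_mono mult.assoc)
      qed
    qed
    also have "\<dots> = \<bar>ls ! b\<bar> * (\<Sum>l<n. \<bar>z l\<bar> * \<bar>z' l\<bar>)" by (simp add: sum_distrib_left)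
    finally show ?thesis .
  qed
  have sumb: "\<bar>\<Sum>i<b. N1 i i * (\<Prod>j\<in>{0..<b}-{i}. ls ! j)\<bar> \<le> b * (n * n * h) * (P / \<bar>ls ! (b - 1)\<bar>)"
  proof -
    have "\<bar>\<Sum>i<b. N1 i i * (\<Prod>j\<in>{0..<b}-{i}. ls ! j)\<bar> \<le> (\<Sum>i<b. \<bar>N1 i i\<bar> * (\<Prod>j\<in>{0..<b}-{i}. \<bar>ls ! j\<bar>))"
      by (rule order.trans[OF sum_abs]) (simp add: abs_mult abs_prod)
    also have "\<dots> \<le> (\<Sum>i<b. (n * n * h) * (P / \<bar>ls ! (b - 1)\<bar>))"
      by (intro sum_mono mult_mono N1ii remb) (auto intro!: prod_nonneg simp: h0)
    also have "\<dots> = b * (n * n * h) * (P / \<bar>ls ! (b - 1)\<bar>)" by simp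
    finally show ?thesis .
  qed
  have "P * \<bar>\<Sum>a<n. \<Sum>c<n. Y a * H1 a c * Y' c\<bar> = \<bar>ddet k N0 N1 - \<gamma> * (\<Sum>i<b. N1 i i * (\<Prod>j\<in>{0..<b}-{i}. ls ! j))\<bar>"
    unfolding dd N1bb[symmetric] Pl[symmetric] by (simp add: abs_mult[symmetric] mult.commute)
  also have "\<dots> \<le> \<bar>ddet k N0 N1\<bar> + \<bar>\<gamma>\<bar> * \<bar>\<Sum>i<b. N1 i i * (\<Prod>j\<in>{0..<b}-{i}. ls ! j)\<bar>"
    by (simp add: abs_mult[symmetric] abs_triangle_ineq4)
  also have "\<dots> \<le> real (card (FF (b+1) n))^2 * yy * yy' * Jc +
      (\<bar>ls ! b\<bar> * (\<Sum>l<n. \<bar>z l\<bar> * \<bar>z' l\<bar>)) * (b * (n * n * h) * (P / \<bar>ls ! (b - 1)\<bar>))"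
    using mult_nonneg_nonneg[OF abs_ge_zero[of "ls ! b"] sum_nonneg[of "{..<n}" "\<lambda>l. \<bar>z l\<bar> * \<bar>z' l\<bar>"]]
    by (intro add_mono phib mult_mono gam sumb) auto
  finally show ?thesis unfolding P_def by (simp add: mult_ac)
qed


lemma Q_bound:
  fixes Q :: "real mat"
  assumes O1: "\<And>i j. i < n \<Longrightarrow> j < n \<Longrightarrow> (\<Sum>a<n. Q $$ (a,i) * Q $$ (a,j)) = (if i = j then 1 else 0)"
    and "a < n" "l < n"
  shows "\<bar>Q $$ (a,l)\<bar> \<le> 1"
proof -
  have "(Q $$ (a,l))^2 \<le> (\<Sum>a'<n. (Q $$ (a',l))^2)"
    by (rule member_le_sum) (use assms in auto)
  also have "\<dots> = 1" using O1[OF assms(3) assms(3)] by (simp add: power2_eq_square)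
  finally have "(Q $$ (a,l))^2 \<le> 1" .
  thus ?thesis using abs_le_square_iff[of "Q $$ (a,l)" 1] by simp
qed

lemma core:
  fixes c :: "real vec \<Rightarrow> real"
  assumes cf: "is_cubic_form n c" and nz: "\<exists>x \<in> carrier_vec n. c x \<noteq> 0"
    and b1: "1 \<le> b" and bn: "b \<le> n - 1" and x0: "x0 \<in> carrier_vec n"
    and hyp: "\<exists>(I,J) \<in> minor_idx n b. Delta n c I J x0 \<noteq> 0"
  shows "\<exists>M \<in> carrier_mat n (n - b).
       (\<forall>y \<in> carrier_vec (n - b). M *\<^sub>v y = 0\<^sub>v n \<longrightarrow> y = 0\<^sub>v (n - b)) \<and>
       (\<forall>y \<in> carrier_vec (n - b). \<forall>y' \<in> carrier_vec (n - b). \<forall>t \<in> carrier_vec n.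
          \<bar>(M *\<^sub>v y) \<bullet> (hess n c t *\<^sub>v (M *\<^sub>v y'))\<bar> \<le>
            (fact b * real (card (FF b n))^2 * real (card (FF (b+1) n))^2 * (Jac_norm n c (b + 1) x0 t / Delta_norm n c b x0)
             + 6 * b * n^6 * (\<bar>eig n c x0 (b + 1)\<bar> * supnorm t / \<bar>eig n c x0 b\<bar>))
              * supnorm (M *\<^sub>v y) * supnorm (M *\<^sub>v y'))"
proof -
  have n2: "b + 1 \<le> n" and n0: "0 < n" and bln: "b \<le> n" using b1 bn by auto
  obtain S K where sym: "sym3 S" and Kp: "K > 0" and Sb: "\<forall>a<n. \<forall>b<n. \<forall>d<n. \<bar>S a b d\<bar> \<le> K"
    and H: "\<forall>x\<in>carrier_vec n. \<forall>i<n. \<forall>j<n. hess n c x $$ (i,j) = 6 * (\<Sum>l<n. S i j l * x $ l) / K"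
    using cubic_facts[OF cf nz] by blast
  have s1: "\<And>a b d. S a b d = S b a d" using sym unfolding sym3_def by auto
  have H0c: "hess n c x0 \<in> carrier_mat n n" unfolding hess_def by simp
  have H0s: "hess n c x0 $$ (i,j) = hess n c x0 $$ (j,i)" if "i < n" "j < n" for i j
    using H x0 that s1 by simp
  define ls where "ls = eig_list n c x0"
  have lsP: "length ls = n \<and> char_poly (hess n c x0) = (\<Prod>a\<leftarrow>ls. [:- a, 1:]) \<and> sorted_wrt (\<lambda>a b. \<bar>b\<bar> \<le> \<bar>a\<bar>) ls"
    unfolding ls_def eig_list_def by (rule someI_ex) (rule sym_real_eigs_sorted[OF H0c H0s])
  hence lsl: "length ls = n" and lscp: "char_poly (hess n c x0) = (\<Prod>a\<leftarrow>ls. [:- a, 1:])"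
    and lss: "sorted_wrt (\<lambda>a b. \<bar>b\<bar> \<le> \<bar>a\<bar>) ls" by auto
  have eigb: "eig n c x0 b = ls ! (b - 1)" and eigb1: "eig n c x0 (b+1) = ls ! b"
    unfolding eig_def ls_def by auto
  obtain Q where Qc: "Q \<in> carrier_mat n n"
    and O1: "\<And>i j. i < n \<Longrightarrow> j < n \<Longrightarrow> (\<Sum>a<n. Q $$ (a,i) * Q $$ (a,j)) = (if i = j then 1 else 0)"
    and EV: "\<And>a c'. a < n \<Longrightarrow> c' < n \<Longrightarrow> hess n c x0 $$ (a,c') = (\<Sum>l<n. Q $$ (a,l) * ls ! l * Q $$ (c',l))"
    using eig_decomp[OF H0c H0s lscp] by blast
  have Qb: "\<And>a l. a < n \<Longrightarrow> l < n \<Longrightarrow> \<bar>Q $$ (a,l)\<bar> \<le> 1" using Q_bound[OF O1] by blast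
  define P where "P = (\<Prod>i<b. \<bar>ls ! i\<bar>)"
  define Kb where "Kb = fact b * real (card (FF b n))^2"
  define \<Delta> where "\<Delta> = Delta_norm n c b x0"
  have mb: "\<bar>Delta n c I J x0\<bar> \<le> Kb * P" if "(I,J) \<in> minor_idx n b" for I J
    unfolding Kb_def P_def by (rule minor_bound[OF Qb EV lsl lss that bln])
  have DleKP: "\<Delta> \<le> Kb * P" unfolding \<Delta>_def Delta_norm_def by (rule Max_minor_le[OF bln]) (use mb in blast)
  obtain I0 J0 where IJ0: "(I0,J0) \<in> minor_idx n b" "Delta n c I0 J0 x0 \<noteq> 0" using hyp by blast
  have "\<bar>Delta n c I0 J0 x0\<bar> \<le> \<Delta>" unfolding \<Delta>_def Delta_norm_def by (rule Max_minor_ge[OF IJ0(1)])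
  hence Dpos: "\<Delta> > 0" using IJ0(2) by linarith
  have P0: "P \<ge> 0" unfolding P_def by (simp add: prod_nonneg)
  have Kb0: "Kb \<ge> 0" unfolding Kb_def by simp
  have Ppos: "P > 0"
  proof (rule ccontr)
    assume "\<not> P > 0" hence "P = 0" using P0 by simp
    thus False using DleKP Dpos by simp
  qed
  have Kbpos: "Kb > 0" using DleKP Dpos Ppos Kb0 by (metis mult_eq_0_iff order.strict_trans1 less_eq_real_def)
  define M where "M = mat n (n - b) (\<lambda>(a,p). Q $$ (a, b + p))"
  have Mc: "M \<in> carrier_mat n (n - b)" unfolding M_def by simp
  have Mv: "(M *\<^sub>v y) $ a = (\<Sum>p<n-b. Q $$ (a, b + p) * y $ p)" if "y \<in> carrier_vec (n - b)" "a < n" for y a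
    using that unfolding M_def by (simp add: scalar_prod_def lessThan_atLeast0)
  have yrec: "y $ q = (\<Sum>a<n. Q $$ (a, b + q) * (M *\<^sub>v y) $ a)" if y: "y \<in> carrier_vec (n - b)" and q: "q < n - b" for y q
  proof -
    have "(\<Sum>a<n. Q $$ (a, b + q) * (M *\<^sub>v y) $ a) = (\<Sum>a<n. \<Sum>p<n-b. Q $$ (a, b + q) * (Q $$ (a, b + p) * y $ p))"
      using Mv[OF y] by (simp add: sum_distrib_left)
    also have "\<dots> = (\<Sum>p<n-b. \<Sum>a<n. Q $$ (a, b + q) * (Q $$ (a, b + p) * y $ p))" by (rule sum.swap)
    also have "\<dots> = (\<Sum>p<n-b. y $ p * (\<Sum>a<n. Q $$ (a, b + q) * Q $$ (a, b + p)))"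
      by (simp add: sum_distrib_left mult_ac)
    also have "\<dots> = (\<Sum>p<n-b. if p = q then y $ p else 0)"
      by (intro sum.cong refl) (use O1 q in auto)
    also have "\<dots> = y $ q" using q by (subst sum.delta) auto
    finally show ?thesis by simp
  qed
  have inj: "\<forall>y \<in> carrier_vec (n - b). M *\<^sub>v y = 0\<^sub>v n \<longrightarrow> y = 0\<^sub>v (n - b)"
  proof (intro ballI impI)
    fix y :: "real vec" assume y: "y \<in> carrier_vec (n - b)" and z: "M *\<^sub>v y = 0\<^sub>v n"
    show "y = 0\<^sub>v (n - b)"
    proof (rule eq_vecI)
      fix q assume "q < dim_vec (0\<^sub>v (n - b) :: real vec)"
      hence q: "q < n - b" by simp
      show "y $ q = 0\<^sub>v (n - b) $ q" using yrec[OF y q] z q by simp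
    qed (use y in simp)
  qed
  have ineq: "\<bar>(M *\<^sub>v y) \<bullet> (hess n c t *\<^sub>v (M *\<^sub>v y'))\<bar> \<le>
            (fact b * real (card (FF b n))^2 * real (card (FF (b+1) n))^2 * (Jac_norm n c (b + 1) x0 t / Delta_norm n c b x0)
             + 6 * real b * real n ^ 6 * (\<bar>eig n c x0 (b + 1)\<bar> * supnorm t / \<bar>eig n c x0 b\<bar>))
              * supnorm (M *\<^sub>v y) * supnorm (M *\<^sub>v y')"
    if y: "y \<in> carrier_vec (n - b)" and y': "y' \<in> carrier_vec (n - b)" and t: "t \<in> carrier_vec n" for y y' t
  proof -
    define Y where "Y = M *\<^sub>v y"
    define Y' where "Y' = M *\<^sub>v y'"
    have Yc: "Y \<in> carrier_vec n" unfolding Y_def using Mc y by (rule mult_mat_vec_carrier)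
    have Yc': "Y' \<in> carrier_vec n" unfolding Y'_def using Mc y' by (rule mult_mat_vec_carrier)
    define yy where "yy = supnorm Y"
    define yy' where "yy' = supnorm Y'"
    define st where "st = supnorm t"
    have yy0: "0 \<le> yy" unfolding yy_def using supnorm_nonneg[OF Yc n0] .
    have yy0': "0 \<le> yy'" unfolding yy'_def using supnorm_nonneg[OF Yc' n0] .
    have st0: "0 \<le> st" unfolding st_def using supnorm_nonneg[OF t n0] .
    define z where "z l = (if b \<le> l then y $ (l - b) else 0)" for l
    define z' where "z' l = (if b \<le> l then y' $ (l - b) else 0)" for l
    have Yd: "(M *\<^sub>v w) $ a = (\<Sum>l<n. Q $$ (a,l) * (if b \<le> l then w $ (l - b) else 0))"
      if w: "w \<in> carrier_vec (n - b)" and a: "a < n" for w a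
    proof -
      have split: "{..<n} = {..<b} \<union> {b..<n}" using bln by auto
      have "(\<Sum>l<n. Q $$ (a,l) * (if b \<le> l then w $ (l - b) else 0)) =
          (\<Sum>l<b. Q $$ (a,l) * (if b \<le> l then w $ (l - b) else 0)) + (\<Sum>l\<in>{b..<n}. Q $$ (a,l) * (if b \<le> l then w $ (l - b) else 0))"
        unfolding split by (rule sum.union_disjoint) auto
      also have "(\<Sum>l<b. Q $$ (a,l) * (if b \<le> l then w $ (l - b) else 0)) = 0" by (intro sum.neutral) auto
      also have "(\<Sum>l\<in>{b..<n}. Q $$ (a,l) * (if b \<le> l then w $ (l - b) else 0)) = (\<Sum>l\<in>{b..<n}. Q $$ (a,l) * w $ (l - b))"
        by (intro sum.cong refl) auto
      also have "\<dots> = (\<Sum>p\<in>{0..<n-b}. Q $$ (a, p + b) * w $ (p + b - b))"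
        using sum.shift_bounds_nat_ivl[of "\<lambda>l. Q $$ (a,l) * w $ (l - b)" 0 b "n - b"] bln by simp
      also have "\<dots> = (M *\<^sub>v w) $ a" using Mv[OF w a] by (simp add: lessThan_atLeast0 add.commute)
      finally show ?thesis by simp
    qed
    have Ydef: "\<And>a. a < n \<Longrightarrow> Y $ a = (\<Sum>l<n. Q $$ (a,l) * z l)" unfolding Y_def z_def using Yd[OF y] by simp
    have Ydef': "\<And>a. a < n \<Longrightarrow> Y' $ a = (\<Sum>l<n. Q $$ (a,l) * z' l)" unfolding Y'_def z'_def using Yd[OF y'] by simp
    define h where "h = 6 * n * st"
    have H1b: "\<bar>hess n c t $$ (a,c')\<bar> \<le> h" if "a < n" "c' < n" for a c'
    proof -
      have "\<bar>hess n c t $$ (a,c')\<bar> = 6 * \<bar>\<Sum>l<n. S a c' l * t $ l\<bar> / K" using H t that Kp by (simp add: abs_mult)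
      have "\<bar>\<Sum>l<n. S a c' l * t $ l\<bar> \<le> (\<Sum>l<n. K * st)"
      proof (rule order.trans[OF sum_abs], rule sum_mono)
        fix l assume "l \<in> {..<n}"
        hence l: "l < n" by simp
        show "\<bar>S a c' l * t $ l\<bar> \<le> K * st" unfolding abs_mult st_def
          by (intro mult_mono) (use Sb that l supnorm_ge[OF t l] Kp in auto)
      qed
      hence "\<bar>\<Sum>l<n. S a c' l * t $ l\<bar> \<le> K * (n * st)" by (simp add: mult_ac)
      hence "6 * \<bar>\<Sum>l<n. S a c' l * t $ l\<bar> / K \<le> h" unfolding h_def using Kp
        by (simp add: pos_divide_le_eq mult_ac)
      thus ?thesis by (simp add: \<open>\<bar>hess n c t $$ (a,c')\<bar> = 6 * \<bar>\<Sum>l<n. S a c' l * t $ l\<bar> / K\<close>)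
    qed
    define Jc where "Jc = Jac_norm n c (b + 1) x0 t"
    have Jb: "\<bar>ddet (b+1) (\<lambda>i j. hess n c x0 $$ (pick I i, pick J j)) (\<lambda>i j. hess n c t $$ (pick I i, pick J j))\<bar> \<le> Jc"
      if IJ: "(I,J) \<in> minor_idx n (b+1)" for I J
      unfolding Jc_def Jac_norm_def jac_ddet[OF H x0 t IJ, symmetric]
      by (rule Max_minor_ge[OF IJ])
    have B: "(\<Prod>i<b. \<bar>ls ! i\<bar>) * \<bar>\<Sum>a<n. \<Sum>c'<n. Y $ a * hess n c t $$ (a,c') * Y' $ c'\<bar> \<le>
     real (card (FF (b+1) n))^2 * yy * yy' * Jc +
     \<bar>ls ! b\<bar> * (\<Sum>l<n. \<bar>z l\<bar> * \<bar>z' l\<bar>) * (real b * (real n * real n * h)) * (\<Prod>i<b. \<bar>ls ! i\<bar>) / \<bar>ls ! (b - 1)\<bar>"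
      by (rule bordered[where ?H0.0="\<lambda>a c'. hess n c x0 $$ (a,c')" and ?H1.0="\<lambda>a c'. hess n c t $$ (a,c')" and Q=Q,
          OF O1 EV lsl lss n2 b1 Ydef _ Ydef' _ H1b Jb])
        (auto simp: z_def z'_def yy_def yy'_def intro: supnorm_ge[OF Yc] supnorm_ge[OF Yc'] Ppos[unfolded P_def])
    define T where "T = (\<Sum>a<n. \<Sum>c'<n. Y $ a * hess n c t $$ (a,c') * Y' $ c')"
    have Teq: "(M *\<^sub>v y) \<bullet> (hess n c t *\<^sub>v (M *\<^sub>v y')) = T"
    proof -
      have Hc: "hess n c t \<in> carrier_mat n n" unfolding hess_def by simp
      have "Y \<bullet> (hess n c t *\<^sub>v Y') = (\<Sum>a<n. Y $ a * (\<Sum>c'<n. hess n c t $$ (a,c') * Y' $ c'))"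
        using Hc Yc Yc' by (simp add: scalar_prod_def lessThan_atLeast0)
      also have "\<dots> = T" unfolding T_def by (simp add: sum_distrib_left mult.assoc)
      finally show ?thesis unfolding Y_def Y'_def .
    qed
    have zb: "\<bar>w $ (l - b)\<bar> \<le> n * supnorm (M *\<^sub>v w)" if w: "w \<in> carrier_vec (n - b)" and l: "l < n" "b \<le> l" for w l
    proof -
      have q: "l - b < n - b" using l by simp
      have Wc: "M *\<^sub>v w \<in> carrier_vec n" using Mc w by (rule mult_mat_vec_carrier)
      have "\<bar>w $ (l - b)\<bar> = \<bar>\<Sum>a<n. Q $$ (a, b + (l - b)) * (M *\<^sub>v w) $ a\<bar>" using yrec[OF w q] by simp
      also have "\<dots> \<le> (\<Sum>a<n. \<bar>Q $$ (a, b + (l - b)) * (M *\<^sub>v w) $ a\<bar>)" by (rule sum_abs)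
      also have "\<dots> \<le> (\<Sum>a<n. 1 * supnorm (M *\<^sub>v w))"
      proof (rule sum_mono)
        fix a assume "a \<in> {..<n}" hence a: "a < n" by simp
        show "\<bar>Q $$ (a, b + (l - b)) * (M *\<^sub>v w) $ a\<bar> \<le> 1 * supnorm (M *\<^sub>v w)" unfolding abs_mult
          by (intro mult_mono Qb supnorm_ge[OF Wc a]) (use a l in auto)
      qed
      finally show ?thesis by simp
    qed
    have zbb: "\<bar>z l\<bar> \<le> n * yy" if "l < n" for l
      using zb[OF y that] yy0 unfolding z_def yy_def Y_def by auto
    have zbb': "\<bar>z' l\<bar> \<le> n * yy'" if "l < n" for l
      using zb[OF y' that] yy0' unfolding z'_def yy'_def Y'_def by auto
    have Zs: "(\<Sum>l<n. \<bar>z l\<bar> * \<bar>z' l\<bar>) \<le> n * ((n * yy) * (n * yy'))"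
    proof -
      have "(\<Sum>l<n. \<bar>z l\<bar> * \<bar>z' l\<bar>) \<le> (\<Sum>l<n. (n * yy) * (n * yy'))"
        by (intro sum_mono mult_mono zbb zbb') (use yy0 in auto)
      thus ?thesis by simp
    qed
    define L where "L = \<bar>ls ! (b - 1)\<bar>"
    have Lpos: "L > 0"
    proof (rule ccontr)
      assume "\<not> L > 0"
      hence "ls ! (b - 1) = 0" unfolding L_def by simp
      hence "P = 0" unfolding P_def using b1 by (intro prod_zero) (auto intro!: bexI[of _ "b - 1"])
      thus False using Ppos by simp
    qed
    define R1 where "R1 = real (card (FF (b+1) n))^2 * yy * yy' * Jc"
    define X where "X = \<bar>ls ! b\<bar> * (\<Sum>l<n. \<bar>z l\<bar> * \<bar>z' l\<bar>) * (real b * (real n * real n * h))"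
    have Jc0: "0 \<le> Jc" using Jb[OF minor_idx_ne[of "b+1" n]] n2 by linarith
    have R10: "0 \<le> R1" unfolding R1_def using yy0 yy0' Jc0 by simp
    have B': "P * \<bar>T\<bar> \<le> R1 + X * P / L" using B unfolding T_def R1_def X_def P_def L_def by simp
    have T1: "\<bar>T\<bar> \<le> R1 / P + X / L"
    proof -
      have "\<bar>T\<bar> \<le> (R1 + X * P / L) / P" using B' Ppos by (simp add: pos_le_divide_eq mult.commute)
      also have "\<dots> = R1 / P + X / L" using Ppos by (simp add: field_simps)
      finally show ?thesis .
    qed
    have R1P: "R1 / P \<le> R1 * Kb / \<Delta>"
    proof -
      have "R1 / P = R1 * Kb / (Kb * P)" using Kbpos by simp
      also have "\<dots> \<le> R1 * Kb / \<Delta>"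
        by (rule divide_left_mono) (use DleKP R10 Kb0 Kbpos Ppos Dpos in auto)
      finally show ?thesis .
    qed
    have XL: "X / L \<le> 6 * real b * real n ^ 6 * (\<bar>ls ! b\<bar> * st / L) * yy * yy'"
    proof -
      have h0: "0 \<le> h" unfolding h_def using st0 by simp
      have "X \<le> \<bar>ls ! b\<bar> * (n * ((n * yy) * (n * yy'))) * (real b * (real n * real n * h))"
        unfolding X_def by (intro mult_mono Zs) (use h0 yy0 yy0' in \<open>auto intro!: sum_nonneg mult_nonneg_nonneg\<close>)
      also have "\<dots> = 6 * real b * real n ^ 6 * (\<bar>ls ! b\<bar> * st) * yy * yy'"
        unfolding h_def by (simp add: eval_nat_numeral algebra_simps)
      finally have "X / L \<le> (6 * real b * real n ^ 6 * (\<bar>ls ! b\<bar> * st) * yy * yy') / L"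
        using Lpos by (simp add: divide_right_mono)
      also have "\<dots> = 6 * real b * real n ^ 6 * (\<bar>ls ! b\<bar> * st / L) * yy * yy'" by simp
      finally show ?thesis .
    qed
    have "\<bar>T\<bar> \<le> R1 * Kb / \<Delta> + 6 * real b * real n ^ 6 * (\<bar>ls ! b\<bar> * st / L) * yy * yy'"
      using T1 R1P XL by linarith
    also have "\<dots> = (Kb * real (card (FF (b+1) n))^2 * (Jc / \<Delta>) + 6 * real b * real n ^ 6 * (\<bar>ls ! b\<bar> * st / L)) * yy * yy'"
      unfolding R1_def by (simp add: algebra_simps)
    finally show ?thesis
      unfolding Teq Kb_def \<Delta>_def Jc_def L_def st_def yy_def yy'_def Y_def Y'_def eigb eigb1 .
  qed
  show ?thesis
    apply (rule bexI[of _ M])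
     apply (rule conjI[OF inj])
     apply (intro ballI)
     apply (rule ineq; assumption)
    apply (rule Mc)
    done
qed

theorem lemma5p1:
  fixes n :: nat
  shows "\<exists>A :: real. \<forall>c b x0.
    is_cubic_form n c \<and> (\<exists>x \<in> carrier_vec n. c x \<noteq> 0) \<and>
    1 \<le> b \<and> b \<le> n - 1 \<and> x0 \<in> carrier_vec n \<and>
    (\<exists>(I,J) \<in> minor_idx n b. Delta n c I J x0 \<noteq> 0)
    \<longrightarrow>
    (\<exists>M \<in> carrier_mat n (n - b).
       (\<forall>y \<in> carrier_vec (n - b). M *\<^sub>v y = 0\<^sub>v n \<longrightarrow> y = 0\<^sub>v (n - b)) \<and>
       (\<forall>y \<in> carrier_vec (n - b). \<forall>y' \<in> carrier_vec (n - b). \<forall>t \<in> carrier_vec n.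
          let Y = M *\<^sub>v y; Y' = M *\<^sub>v y' in
          \<bar>Y \<bullet> (hess n c t *\<^sub>v Y')\<bar> \<le>
            A * (Jac_norm n c (b + 1) x0 t / Delta_norm n c b x0
                 + \<bar>eig n c x0 (b + 1)\<bar> * supnorm t / \<bar>eig n c x0 b\<bar>)
              * supnorm Y * supnorm Y'))"
proof -
  define A where "A = (\<Sum>b\<in>{..n}. fact b * real (card (FF b n))^2 * real (card (FF (b+1) n))^2 + 6 * real b * real n ^ 6)"
  show ?thesis
  proof (rule exI[of _ A], intro allI impI)
    fix c b x0
    assume hyps: "is_cubic_form n c \<and> (\<exists>x \<in> carrier_vec n. c x \<noteq> 0) \<and>
      1 \<le> b \<and> b \<le> n - 1 \<and> x0 \<in> carrier_vec n \<and>
      (\<exists>(I,J) \<in> minor_idx n b. Delta n c I J x0 \<noteq> 0)"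
    hence cf: "is_cubic_form n c" and nz: "\<exists>x \<in> carrier_vec n. c x \<noteq> 0" and b1: "1 \<le> b" and bn: "b \<le> n - 1"
      and x0: "x0 \<in> carrier_vec n" and hyp: "\<exists>(I,J) \<in> minor_idx n b. Delta n c I J x0 \<noteq> 0" by auto
    have n0: "0 < n" using b1 bn by auto
    define C1 where "C1 = fact b * real (card (FF b n))^2 * real (card (FF (b+1) n))^2"
    define C2 where "C2 = 6 * real b * real n ^ 6"
    have C10: "0 \<le> C1" unfolding C1_def by simp
    have C20: "0 \<le> C2" unfolding C2_def by simp
    have CA: "C1 + C2 \<le> A" unfolding A_def C1_def C2_def
      by (rule member_le_sum[of b "{..n}" "\<lambda>b. fact b * real (card (FF b n))^2 * real (card (FF (b+1) n))^2 + 6 * real b * real n ^ 6"])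
         (use bn in auto)
    obtain M where Mc: "M \<in> carrier_mat n (n - b)"
      and inj: "\<forall>y \<in> carrier_vec (n - b). M *\<^sub>v y = 0\<^sub>v n \<longrightarrow> y = 0\<^sub>v (n - b)"
      and ineq: "\<forall>y \<in> carrier_vec (n - b). \<forall>y' \<in> carrier_vec (n - b). \<forall>t \<in> carrier_vec n.
          \<bar>(M *\<^sub>v y) \<bullet> (hess n c t *\<^sub>v (M *\<^sub>v y'))\<bar> \<le>
            (fact b * real (card (FF b n))^2 * real (card (FF (b+1) n))^2 * (Jac_norm n c (b + 1) x0 t / Delta_norm n c b x0)
             + 6 * real b * real n ^ 6 * (\<bar>eig n c x0 (b + 1)\<bar> * supnorm t / \<bar>eig n c x0 b\<bar>))
              * supnorm (M *\<^sub>v y) * supnorm (M *\<^sub>v y')"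
      using core[OF cf nz b1 bn x0 hyp] by (elim bexE conjE) (rule that; assumption)
    have Dpos: "0 \<le> Delta_norm n c b x0"
    proof -
      obtain I J where IJ: "(I,J) \<in> minor_idx n b" using hyp by blast
      have "\<bar>Delta n c I J x0\<bar> \<le> Delta_norm n c b x0" unfolding Delta_norm_def by (rule Max_minor_ge[OF IJ])
      thus ?thesis by linarith
    qed
    show "\<exists>M \<in> carrier_mat n (n - b).
       (\<forall>y \<in> carrier_vec (n - b). M *\<^sub>v y = 0\<^sub>v n \<longrightarrow> y = 0\<^sub>v (n - b)) \<and>
       (\<forall>y \<in> carrier_vec (n - b). \<forall>y' \<in> carrier_vec (n - b). \<forall>t \<in> carrier_vec n.
          let Y = M *\<^sub>v y; Y' = M *\<^sub>v y' in
          \<bar>Y \<bullet> (hess n c t *\<^sub>v Y')\<bar> \<le>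
            A * (Jac_norm n c (b + 1) x0 t / Delta_norm n c b x0
                 + \<bar>eig n c x0 (b + 1)\<bar> * supnorm t / \<bar>eig n c x0 b\<bar>)
              * supnorm Y * supnorm Y')"
    proof (rule bexI[of _ M])
      show "M \<in> carrier_mat n (n - b)" by (rule Mc)
    next
      show "(\<forall>y \<in> carrier_vec (n - b). M *\<^sub>v y = 0\<^sub>v n \<longrightarrow> y = 0\<^sub>v (n - b)) \<and>
       (\<forall>y \<in> carrier_vec (n - b). \<forall>y' \<in> carrier_vec (n - b). \<forall>t \<in> carrier_vec n.
          let Y = M *\<^sub>v y; Y' = M *\<^sub>v y' in
          \<bar>Y \<bullet> (hess n c t *\<^sub>v Y')\<bar> \<le>
            A * (Jac_norm n c (b + 1) x0 t / Delta_norm n c b x0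
                 + \<bar>eig n c x0 (b + 1)\<bar> * supnorm t / \<bar>eig n c x0 b\<bar>)
              * supnorm Y * supnorm Y')"
      proof (rule conjI[OF inj], intro ballI, unfold Let_def)
        fix y y' t :: "real vec" assume y: "y \<in> carrier_vec (n - b)" and y': "y' \<in> carrier_vec (n - b)" and t: "t \<in> carrier_vec n"
        have Yc: "M *\<^sub>v y \<in> carrier_vec n" using Mc y by (rule mult_mat_vec_carrier)
        have Yc': "M *\<^sub>v y' \<in> carrier_vec n" using Mc y' by (rule mult_mat_vec_carrier)
        define yy where "yy = supnorm (M *\<^sub>v y)"
        define yy' where "yy' = supnorm (M *\<^sub>v y')"
        have yy0: "0 \<le> yy" unfolding yy_def using supnorm_nonneg[OF Yc n0] .
        have yy0': "0 \<le> yy'" unfolding yy'_def using supnorm_nonneg[OF Yc' n0] .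
        define X1 where "X1 = Jac_norm n c (b + 1) x0 t / Delta_norm n c b x0"
        define X2 where "X2 = \<bar>eig n c x0 (b + 1)\<bar> * supnorm t / \<bar>eig n c x0 b\<bar>"
        have J0: "0 \<le> Jac_norm n c (b + 1) x0 t"
        proof -
          have IJ: "({..<b+1},{..<b+1}) \<in> minor_idx n (b+1)" by (rule minor_idx_ne) (use bn b1 in auto)
          show ?thesis unfolding Jac_norm_def by (rule order.trans[OF _ Max_minor_ge[OF IJ]]) simp
        qed
        have X10: "0 \<le> X1" unfolding X1_def using J0 Dpos by simp
        have X20: "0 \<le> X2" unfolding X2_def using supnorm_nonneg[OF t n0] by simp
        have "\<bar>(M *\<^sub>v y) \<bullet> (hess n c t *\<^sub>v (M *\<^sub>v y'))\<bar> \<le> (C1 * X1 + C2 * X2) * yy * yy'"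
          using ineq y y' t unfolding C1_def C2_def X1_def X2_def yy_def yy'_def by simp
        also have "\<dots> \<le> (A * (X1 + X2)) * yy * yy'"
        proof (intro mult_right_mono yy0 yy0')
          have "C1 * X1 \<le> A * X1" using CA C20 X10 by (intro mult_right_mono) auto
          moreover have "C2 * X2 \<le> A * X2" using CA C10 X20 by (intro mult_right_mono) auto
          ultimately show "C1 * X1 + C2 * X2 \<le> A * (X1 + X2)" by (simp add: distrib_left)
        qed
        finally show "\<bar>(M *\<^sub>v y) \<bullet> (hess n c t *\<^sub>v (M *\<^sub>v y'))\<bar> \<le>
            A * (Jac_norm n c (b + 1) x0 t / Delta_norm n c b x0
                 + \<bar>eig n c x0 (b + 1)\<bar> * supnorm t / \<bar>eig n c x0 b\<bar>)
              * supnorm (M *\<^sub>v y) * supnorm (M *\<^sub>v y')"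
          unfolding X1_def X2_def yy_def yy'_def by simp
      qed
    qed
  qed
qed


end
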